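(* Suppose $p_j=1$ for all $j\in[n]$. Then for any constant $\epsilon\in(0,1)$ and any $\alpha\in(0,1)$, IPR with $\rho=2$ is a $(1+\epsilon)(1+\alpha)$-consistent and $(2+1/\alpha)$-robust partitioning algorithm.
   Context: Scheduling with Speed Predictions (SSP). An instance consists of $n$ jobs with processing times $p_1,\dots,p_n\ge 0$ and $m$ machines with true speeds $s_1,\dots,s_m>0$; processing job $j$ on machine $i$ takes time $p_j/s_i$. For a bag (set of jobs) $B$, $p(B)=\sum_{j\in B}p_j$. In the partitioning stage the algorithm receives $\mathbf p$ and predicted speeds $\hat{\mathbf s}\ge0$ (not $\mathbf s$) and partitions $[n]$ into $m$ possibly empty bags. In the scheduling stage $\mathbf s$ is revealed and each bag is assigned whole to a machine; the makespan is $\max_i(\text{total processing time on } i)/s_i$. $opt(\mathbf p,\mathbf s)$ is the minimum makespan of assigning individual jobs knowing $\mathbf s$. A partitioning algorithm is $c$-consistent (resp. $\beta$-robust) if the two-stage algorithm that runs it and then assigns the bags to machines with minimum possible makespan has makespan at most $c\cdot opt(\mathbf p,\mathbf s)$ whenever $\hat{\mathbf s}=\mathbf s$ (resp. at most $\beta\cdot opt(\mathbf p,\mathbf s)$ for all $\mathbf p,\hat{\mathbf s},\mathbf s$). Algorithm IPR. Input: predicted speeds $\hat s_1\ge\dots\ge\hat s_m$, $\mathbf p$, $\alpha$, accuracy $\epsilon\in(0,1)$, $\rho\ge1$. (1) Compute a partition $B_1,\dots,B_m$ with $p(B_1)\ge\dots\ge p(B_m)$ such that putting $B_i$ on machine $i$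 has makespan at most $(1+\epsilon)opt(\mathbf p,\hat{\mathbf s})$ under speeds $\hat{\mathbf s}$. (2) Set $\overline{OPT}_C=\max_i p(B_i)/\hat s_i$ and $\mathcal M_i=\{B_i\}$. (3) While $\max\{p(B): B\in\cup_i\mathcal M_i, |B|\ge2\}>\rho\min\{p(B):B\in\cup_i\mathcal M_i\}$: compute $\mathcal M'=$ LPT-Rebalance$(\mathcal M)$; if $\max_i\sum_{B\in\mathcal M'_i}p(B)/\hat s_i>(1+\alpha)\overline{OPT}_C$ return the current bags $\cup_i\mathcal M_i$; else $\mathcal M\leftarrow\mathcal M'$. (4) Return the bags $\cup_i\mathcal M_i$. LPT-Rebalance: let $B_{\min}$ be a bag of minimum $p(B)$ over all bags, $\mathcal M_{\min}$ its collection, and $\mathcal M_{\max}$ a collection containing a bag of maximum $p(B)$ among bags with at least two jobs. Move $B_{\min}$ into $\mathcal M_{\max}$; let $\ell=|\mathcal M_{\max}|$; pool the jobs of $\mathcal M_{\max}$ and redistribute them into $\ell$ new bags by LPT (jobs in non-increasing processing time, each into a currently least-loaded bag); these form the new $\mathcal M_{\max}$. *)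

theory Defs
  imports "HOL-Analysis.Analysis" "HOL-Library.FuncSet"
begin

(* Jobs are 0..<n, machines are 0..<m, bag labels are 0..<m.
   Processing times p :: nat => real, speeds sp :: nat => real. *)

(* time needed to process load L on a machine of speed sp; speed 0 (allowed for
   predicted speeds) gives infinite time unless the load is 0 *)
definition ptime :: "real \<Rightarrow> real \<Rightarrow> ereal" where
  "ptime L sp = (if sp > 0 then ereal (L / sp) else if L = 0 then 0 else \<infinity>)"

definition load :: "nat \<Rightarrow> (nat \<Rightarrow> real) \<Rightarrow> (nat \<Rightarrow> nat) \<Rightarrow> nat \<Rightarrow> real" where
  "load n p f i = (\<Sum>j | j < n \<and> f j = i. p j)"

definition makespan :: "nat \<Rightarrow> nat \<Rightarrow> (nat \<Rightarrow> real) \<Rightarrow> (nat \<Rightarrow> real) \<Rightarrow> (nat \<Rightarrow> nat) \<Rightarrow> ereal" where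
  "makespan n m p sp f = Max ((\<lambda>i. ptime (load n p f i) (sp i)) ` {..<m})"

definition opt :: "nat \<Rightarrow> nat \<Rightarrow> (nat \<Rightarrow> real) \<Rightarrow> (nat \<Rightarrow> real) \<Rightarrow> ereal" where
  "opt n m p sp = Min (makespan n m p sp ` ({..<n} \<rightarrow>\<^sub>E {..<m}))"

(* A partition of the jobs into m (possibly empty) bags is a map beta from jobs to
   bag labels < m; bag k is the set of jobs with label k. *)
definition bag :: "nat \<Rightarrow> (nat \<Rightarrow> nat) \<Rightarrow> nat \<Rightarrow> nat set" where
  "bag n \<beta> k = {j. j < n \<and> \<beta> j = k}"

definition psum :: "(nat \<Rightarrow> real) \<Rightarrow> nat set \<Rightarrow> real" where
  "psum p B = (\<Sum>j\<in>B. p j)"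

(* scheduling stage: assign whole bags to machines (sigma) with minimum makespan *)
definition bag_makespan :: "nat \<Rightarrow> nat \<Rightarrow> (nat \<Rightarrow> real) \<Rightarrow> (nat \<Rightarrow> real) \<Rightarrow> (nat \<Rightarrow> nat) \<Rightarrow> ereal" where
  "bag_makespan n m p sp \<beta> = Min ((\<lambda>\<sigma>. makespan n m p sp (\<sigma> \<circ> \<beta>)) ` ({..<m} \<rightarrow>\<^sub>E {..<m}))"

(* Step (1) of IPR: bags B_0,...,B_{m-1} with non-increasing p(B_i) such that
   putting B_i on machine i has makespan <= (1+eps) opt(p, sh) under speeds sh *)
definition ipr_init :: "nat \<Rightarrow> nat \<Rightarrow> (nat \<Rightarrow> real) \<Rightarrow> (nat \<Rightarrow> real) \<Rightarrow> real \<Rightarrow> (nat \<Rightarrow> nat) \<Rightarrow> bool" where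
  "ipr_init n m p sh \<epsilon> \<beta> \<longleftrightarrow>
     (\<forall>j<n. \<beta> j < m) \<and>
     (\<forall>i. Suc i < m \<longrightarrow> psum p (bag n \<beta> (Suc i)) \<le> psum p (bag n \<beta> i)) \<and>
     makespan n m p sh \<beta> \<le> ereal (1 + \<epsilon>) * opt n m p sh"

definition loop_cond :: "nat \<Rightarrow> nat \<Rightarrow> (nat \<Rightarrow> real) \<Rightarrow> real \<Rightarrow> (nat \<Rightarrow> nat) \<Rightarrow> bool" where
  "loop_cond n m p \<rho> \<beta> \<longleftrightarrow>
     (let K2 = {k. k < m \<and> card (bag n \<beta> k) \<ge> 2} in
        K2 \<noteq> {} \<and>
        Max ((\<lambda>k. psum p (bag n \<beta> k)) ` K2) > \<rho> * Min ((\<lambda>k. psum p (bag n \<beta> k)) ` {..<m}))"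

(* LPT: the jobs js (in list order, non-increasing processing time) are each put into a
   currently least-loaded bag among the labels L (ties broken arbitrarily) *)
definition lpt_assign :: "(nat \<Rightarrow> real) \<Rightarrow> nat set \<Rightarrow> nat list \<Rightarrow> (nat \<Rightarrow> nat) \<Rightarrow> bool" where
  "lpt_assign p L js a \<longleftrightarrow>
     distinct js \<and> sorted_wrt (\<lambda>x y. p y \<le> p x) js \<and>
     (\<forall>t<length js. a (js ! t) \<in> L \<and>
        (\<forall>k\<in>L. (\<Sum>j | j \<in> set (take t js) \<and> a j = a (js ! t). p j)
                 \<le> (\<Sum>j | j \<in> set (take t js) \<and> a j = k. p j)))"

(* State of IPR: (beta, c): beta maps jobs to bag labels, c maps bag labels to the
   index of the collection M_i containing that bag.  LPT-Rebalance as a relation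
   (all admissible choices of B_min, M_max and tie-breaking). *)
definition lpt_rebalance :: "nat \<Rightarrow> nat \<Rightarrow> (nat \<Rightarrow> real) \<Rightarrow>
    (nat \<Rightarrow> nat) \<times> (nat \<Rightarrow> nat) \<Rightarrow> (nat \<Rightarrow> nat) \<times> (nat \<Rightarrow> nat) \<Rightarrow> bool" where
  "lpt_rebalance n m p st st' \<longleftrightarrow>
     (let \<beta> = fst st; c = snd st; \<beta>' = fst st'; c' = snd st' in
     (\<exists>kmin kmax js.
        kmin < m \<and> (\<forall>k<m. psum p (bag n \<beta> kmin) \<le> psum p (bag n \<beta> k)) \<and>
        kmax < m \<and> card (bag n \<beta> kmax) \<ge> 2 \<and>
        (\<forall>k<m. card (bag n \<beta> k) \<ge> 2 \<longrightarrow> psum p (bag n \<beta> k) \<le> psum p (bag n \<beta> kmax)) \<and>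
        c' = c(kmin := c kmax) \<and>
        set js = {j. j < n \<and> \<beta> j \<in> {k. k < m \<and> c' k = c kmax}} \<and>
        lpt_assign p {k. k < m \<and> c' k = c kmax} js \<beta>' \<and>
        (\<forall>j. j < n \<and> j \<notin> set js \<longrightarrow> \<beta>' j = \<beta> j)))"

(* makespan under sh of the collections: machine i gets all bags of M_i *)
definition coll_makespan :: "nat \<Rightarrow> nat \<Rightarrow> (nat \<Rightarrow> real) \<Rightarrow> (nat \<Rightarrow> real) \<Rightarrow>
    (nat \<Rightarrow> nat) \<times> (nat \<Rightarrow> nat) \<Rightarrow> ereal" where
  "coll_makespan n m p sh st = makespan n m p sh (snd st \<circ> fst st)"

(* one accepted iteration of the while loop (OPTC = \<overline>{OPT}_C) *)
definition ipr_step :: "nat \<Rightarrow> nat \<Rightarrow> (nat \<Rightarrow> real) \<Rightarrow> (nat \<Rightarrow> real) \<Rightarrow> real \<Rightarrow> real \<Rightarrow> ereal \<Rightarrow>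
    (nat \<Rightarrow> nat) \<times> (nat \<Rightarrow> nat) \<Rightarrow> (nat \<Rightarrow> nat) \<times> (nat \<Rightarrow> nat) \<Rightarrow> bool" where
  "ipr_step n m p sh \<alpha> \<rho> OPTC st st' \<longleftrightarrow>
     loop_cond n m p \<rho> (fst st) \<and> lpt_rebalance n m p st st' \<and>
     \<not> (coll_makespan n m p sh st' > ereal (1 + \<alpha>) * OPTC)"

inductive ipr_run :: "nat \<Rightarrow> nat \<Rightarrow> (nat \<Rightarrow> real) \<Rightarrow> (nat \<Rightarrow> real) \<Rightarrow> real \<Rightarrow> real \<Rightarrow> ereal \<Rightarrow>
    (nat \<Rightarrow> nat) \<times> (nat \<Rightarrow> nat) \<Rightarrow> (nat \<Rightarrow> nat) \<Rightarrow> bool"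
  for n m p sh \<alpha> \<rho> OPTC where
  stop: "\<not> loop_cond n m p \<rho> (fst st) \<Longrightarrow> ipr_run n m p sh \<alpha> \<rho> OPTC st (fst st)"
| reject: "loop_cond n m p \<rho> (fst st) \<Longrightarrow> lpt_rebalance n m p st st' \<Longrightarrow>
     coll_makespan n m p sh st' > ereal (1 + \<alpha>) * OPTC \<Longrightarrow> ipr_run n m p sh \<alpha> \<rho> OPTC st (fst st)"
| cont: "ipr_step n m p sh \<alpha> \<rho> OPTC st st' \<Longrightarrow> ipr_run n m p sh \<alpha> \<rho> OPTC st' out \<Longrightarrow>
     ipr_run n m p sh \<alpha> \<rho> OPTC st out"

definition ipr_output :: "nat \<Rightarrow> nat \<Rightarrow> (nat \<Rightarrow> real) \<Rightarrow> (nat \<Rightarrow> real) \<Rightarrow> real \<Rightarrow> real \<Rightarrow> real \<Rightarrow>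
    (nat \<Rightarrow> nat) \<Rightarrow> bool" where
  "ipr_output n m p sh \<epsilon> \<alpha> \<rho> out \<longleftrightarrow>
     (\<exists>\<beta>0. ipr_init n m p sh \<epsilon> \<beta>0 \<and> ipr_run n m p sh \<alpha> \<rho> (makespan n m p sh \<beta>0) (\<beta>0, id) out)"

end

theory Submission
  imports Defs
begin

definition sz :: "nat \<Rightarrow> (nat \<Rightarrow> nat) \<Rightarrow> nat \<Rightarrow> nat" where
  "sz n \<beta> k = card (bag n \<beta> k)"
definition cset :: "nat \<Rightarrow> (nat \<Rightarrow> nat) \<Rightarrow> nat \<Rightarrow> nat set" where
  "cset m c i = {k. k < m \<and> c k = i}"
definition cload :: "nat \<Rightarrow> nat \<Rightarrow> (nat \<Rightarrow> nat) \<Rightarrow> (nat \<Rightarrow> nat) \<Rightarrow> nat \<Rightarrow> nat" where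
  "cload n m \<beta> c i = (\<Sum>k\<in>cset m c i. sz n \<beta> k)"
definition msz :: "nat \<Rightarrow> nat \<Rightarrow> (nat \<Rightarrow> nat) \<Rightarrow> nat" where
  "msz n m \<beta> = Min (sz n \<beta> ` {..<m})"

lemma finite_bag[simp]: "finite (bag n \<beta> k)"
  unfolding bag_def by auto
lemma finite_cset[simp]: "finite (cset m c i)"
  unfolding cset_def by auto

lemma psum_one: "psum (\<lambda>_. 1) B = real (card B)"
  unfolding psum_def by simp

lemma psum_bag: "psum (\<lambda>_. 1) (bag n \<beta> k) = real (sz n \<beta> k)"
  unfolding sz_def psum_one by simp

lemma load_one: "load n (\<lambda>_. 1) f i = real (card {j. j < n \<and> f j = i})"
  unfolding load_def by simp

lemma card_fibers:
  assumes "finite J" "finite T" "g ` J \<subseteq> T"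
  shows "card J = (\<Sum>k\<in>T. card {j\<in>J. g j = k})"
  using sum.group[OF assms, of "\<lambda>_. 1::nat"] by simp

lemma sum_sz:
  assumes "\<forall>j<n. \<beta> j < m"
  shows "(\<Sum>k<m. sz n \<beta> k) = n"
proof -
  have "n = card {..<n}" by simp
  also have "\<dots> = (\<Sum>k\<in>{..<m}. card {j\<in>{..<n}. \<beta> j = k})"
    by (rule card_fibers) (use assms in auto)
  also have "\<dots> = (\<Sum>k<m. sz n \<beta> k)"
    unfolding sz_def bag_def by (intro sum.cong) (auto intro: arg_cong[where f=card])
  finally show ?thesis by simp
qed

lemma card_comp:
  assumes "\<forall>j<n. \<beta> j < m"
  shows "card {j. j < n \<and> c (\<beta> j) = i} = cload n m \<beta> c i"
proof -
  let ?J = "{j. j < n \<and> c (\<beta> j) = i}"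
  have "card ?J = (\<Sum>k\<in>cset m c i. card {j\<in>?J. \<beta> j = k})"
    by (rule card_fibers) (use assms in \<open>auto simp: cset_def\<close>)
  also have "\<dots> = cload n m \<beta> c i"
    unfolding cload_def sz_def bag_def cset_def by (intro sum.cong) (auto intro: arg_cong[where f=card])
  finally show ?thesis .
qed

lemma ptime_le_iff:
  assumes "0 \<le> L" "0 \<le> sp" "0 \<le> X"
  shows "ptime L sp \<le> ereal X \<longleftrightarrow> L \<le> X * sp"
  using assms by (auto simp: ptime_def pos_divide_le_eq)

lemma ptime_nonneg: "0 \<le> L \<Longrightarrow> 0 \<le> ptime L sp"
  by (auto simp: ptime_def)

lemma ptime_mono: "0 \<le> L \<Longrightarrow> L \<le> L' \<Longrightarrow> ptime L sp \<le> ptime L' sp"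
  by (auto simp: ptime_def divide_right_mono)

lemma makespan_le_iff:
  assumes "1 \<le> m"
  shows "makespan n m p sp f \<le> Y \<longleftrightarrow> (\<forall>i<m. ptime (load n p f i) (sp i) \<le> Y)"
  unfolding makespan_def using assms by (subst Max_le_iff) (auto simp: lessThan_empty_iff)

lemma makespan_ge:
  "i < m \<Longrightarrow> ptime (load n p f i) (sp i) \<le> makespan n m p sp f"
  unfolding makespan_def by (rule Max_ge) auto

lemma makespan_nonneg:
  assumes "1 \<le> m" shows "0 \<le> makespan n (m::nat) (\<lambda>_. 1) sp f"
proof -
  have "0 \<le> ptime (load n (\<lambda>_. 1) f 0) (sp 0)" by (rule ptime_nonneg) (simp add: load_one)
  also have "\<dots> \<le> makespan n m (\<lambda>_. 1) sp f" using assms by (intro makespan_ge) auto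
  finally show ?thesis .
qed

lemma makespan_cong:
  assumes "\<forall>j<n. f j = g j"
  shows "makespan n m p sp f = makespan n m p sp g"
proof -
  have "\<And>i. load n p f i = load n p g i" unfolding load_def using assms
    by (intro sum.cong) auto
  thus ?thesis unfolding makespan_def by simp
qed

lemma bag_makespan_le:
  assumes "\<sigma> \<in> {..<m} \<rightarrow>\<^sub>E {..<m}"
  shows "bag_makespan n m p sp \<beta> \<le> makespan n m p sp (\<sigma> \<circ> \<beta>)"
  unfolding bag_makespan_def using assms
  by (intro Min_le) (auto intro: finite_PiE)

lemma bag_makespan_le':
  assumes "\<forall>k<m. \<sigma> k < m" "\<forall>j<n. \<beta> j < m"
  shows "bag_makespan n m p sp \<beta> \<le> makespan n m p sp (\<sigma> \<circ> \<beta>)"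
proof -
  have "bag_makespan n m p sp \<beta> \<le> makespan n m p sp (restrict \<sigma> {..<m} \<circ> \<beta>)"
    by (rule bag_makespan_le) (use assms in auto)
  also have "\<dots> = makespan n m p sp (\<sigma> \<circ> \<beta>)"
    by (rule makespan_cong) (use assms in auto)
  finally show ?thesis .
qed

lemma opt_attained:
  assumes "1 \<le> m"
  shows "\<exists>f\<in>{..<n} \<rightarrow>\<^sub>E {..<m}. opt n m p sp = makespan n m p sp f"
proof -
  have ne: "{..<n} \<rightarrow>\<^sub>E {..<(m::nat)} \<noteq> {}" using assms by (auto simp: PiE_eq_empty_iff lessThan_empty_iff)
  have "opt n m p sp \<in> makespan n m p sp ` ({..<n} \<rightarrow>\<^sub>E {..<m})"
    unfolding opt_def by (rule Min_in) (use ne in \<open>auto intro: finite_PiE\<close>)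
  thus ?thesis by auto
qed

lemma greedy_aux:
  fixes b x :: "nat \<Rightarrow> nat" and R a :: real
  assumes R: "R \<ge> 1" and a: "a \<ge> 1" and bnd: "\<forall>k<m. a \<le> b k \<and> b k \<le> R*a + 1"
    and tot: "(\<Sum>k<m. b k) = (\<Sum>i<m. x i)"
  shows "K \<subseteq> {..<m} \<Longrightarrow> card K = p \<Longrightarrow> \<exists>\<sigma>. (\<forall>k\<in>K. \<sigma> k < m) \<and>
           (\<forall>i<m. real (\<Sum>k\<in>{k\<in>K. \<sigma> k = i}. b k) \<le> (R+1) * x i)"
proof (induction p arbitrary: K)
  case 0
  then have "K = {}" using finite_subset[of K "{..<m}"] by auto
  then show ?case using R by (auto intro!: exI[of _ "\<lambda>_. 0"] mult_nonneg_nonneg)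
next
  case (Suc p)
  have fK: "finite K" using Suc.prems finite_subset by auto
  have neK: "K \<noteq> {}" using Suc.prems by auto
  obtain k where kK: "k \<in> K" and kmin: "\<forall>k'\<in>K. b k \<le> b k'"
    using ex_min_if_finite[OF fK neK] by (metis arg_min_if_finite(1,2)[OF fK neK, of b] not_less)
  define K0 where "K0 = K - {k}"
  have cK0: "card K0 = p" using Suc.prems kK fK unfolding K0_def by auto
  obtain \<sigma> where sm: "\<forall>k\<in>K0. \<sigma> k < m"
    and sl: "\<forall>i<m. real (\<Sum>k\<in>{k\<in>K0. \<sigma> k = i}. b k) \<le> (R+1) * x i"
    using Suc.IH[of K0] cK0 Suc.prems unfolding K0_def by auto
  have fK0: "finite K0" using fK unfolding K0_def by auto
  have km: "k < m" using kK Suc.prems by auto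
  define B where "B = real (b k)"
  have "\<exists>i<m. real (\<Sum>k\<in>{k\<in>K0. \<sigma> k = i}. b k) + B \<le> (R+1) * x i"
  proof (rule ccontr)
    assume "\<not> ?thesis"
    hence lt: "\<forall>i<m. (R+1) * x i < real (\<Sum>k\<in>{k\<in>K0. \<sigma> k = i}. b k) + B" by auto
    have "(\<Sum>i<m. (R+1) * x i) < (\<Sum>i<m. real (\<Sum>k\<in>{k\<in>K0. \<sigma> k = i}. b k) + B)"
      using km lt by (intro sum_strict_mono) auto
    also have "\<dots> = real (\<Sum>i<m. (\<Sum>k\<in>{k\<in>K0. \<sigma> k = i}. b k)) + m * B"
      by (simp add: sum.distrib)
    also have "(\<Sum>i<m. (\<Sum>k\<in>{k\<in>K0. \<sigma> k = i}. b k)) = (\<Sum>k\<in>K0. b k)"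
      by (rule sum.group) (use fK0 sm in auto)
    finally have ineq: "(R+1) * real (\<Sum>i<m. x i) < real (\<Sum>k\<in>K0. b k) + m * B"
      by (simp add: sum_distrib_left)
    define P where "P = real (\<Sum>k\<in>K0. b k)"
    define Q where "Q = real (\<Sum>k\<in>{..<m} - K. b k)"
    have split: "(\<Sum>k<m. b k) = (\<Sum>k\<in>K0. b k) + b k + (\<Sum>k\<in>{..<m} - K. b k)"
    proof -
      have "(\<Sum>k<m. b k) = (\<Sum>k\<in>K. b k) + (\<Sum>k\<in>{..<m} - K. b k)"
        using Suc.prems by (metis add.commute finite_lessThan sum.subset_diff)
      also have "(\<Sum>k\<in>K. b k) = b k + (\<Sum>k\<in>K0. b k)"
        unfolding K0_def using fK kK by (simp add: sum.remove)
      finally show ?thesis by simp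
    qed
    have nPQ: "real (\<Sum>i<m. x i) = P + B + Q" unfolding P_def Q_def B_def
      using split tot by simp
    have P: "P \<ge> p * B"
    proof -
      have "(\<Sum>k\<in>K0. B) \<le> (\<Sum>k\<in>K0. real (b k))"
        by (rule sum_mono) (use kmin B_def K0_def in auto)
      thus ?thesis using cK0 unfolding P_def by simp
    qed
    have cr: "card ({..<m} - K) = m - Suc p"
      using Suc.prems by (simp add: card_Diff_subset finite_subset)
    have Q: "Q \<ge> real (m - Suc p) * a"
    proof -
      have "(\<Sum>k\<in>{..<m} - K. a) \<le> (\<Sum>k\<in>{..<m} - K. real (b k))"
        by (rule sum_mono) (use bnd in auto)
      thus ?thesis using cr unfolding Q_def by simp
    qed
    have pm: "Suc p \<le> m" using Suc.prems card_mono[of "{..<m}" K] by auto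
    have Bb: "B \<le> (R+1) * a" using bnd km a unfolding B_def by (auto simp: algebra_simps)
    have B0: "B \<ge> 0" unfolding B_def by simp
    have h1: "(R+1) * Q \<ge> real (m - Suc p) * B"
    proof -
      have "real (m - Suc p) * B \<le> real (m - Suc p) * ((R+1) * a)"
        by (rule mult_left_mono[OF Bb]) simp
      also have "\<dots> \<le> (R+1) * Q" using Q R
        by (metis mult.left_commute mult_left_mono add_nonneg_nonneg zero_le_one order_trans le_numeral_extra(1) linorder_not_le not_one_le_zero)
      finally show ?thesis .
    qed
    have h2: "R * P \<ge> p * B"
    proof -
      have "real p * B \<le> R * (real p * B)" using mult_right_mono[of 1 R "real p * B"] R B0 by simp
      also have "\<dots> \<le> R * P" using P R by (intro mult_left_mono) auto
      finally show ?thesis .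
    qed
    have h3: "R * B \<ge> 0" using R B0 by simp
    have mm: "real (m - Suc p) = real m - p - 1" using pm by auto
    have "(R+1) * (P + B + Q) < P + m * B" using ineq nPQ by (simp add: P_def)
    hence "R*P + (R+1)*B + (R+1)*Q < m*B" by (simp add: algebra_simps)
    thus False using h1 h2 h3 mm by (simp add: algebra_simps)
  qed
  then obtain i where im: "i < m" and fit: "real (\<Sum>k\<in>{k\<in>K0. \<sigma> k = i}. b k) + B \<le> (R+1) * x i"
    by auto
  define \<sigma>' where "\<sigma>' = \<sigma>(k := i)"
  have "\<forall>i'<m. real (\<Sum>k'\<in>{k'\<in>K. \<sigma>' k' = i'}. b k') \<le> (R+1) * x i'"
  proof (intro allI impI)
    fix i' assume i'm: "i' < m"
    show "real (\<Sum>k'\<in>{k'\<in>K. \<sigma>' k' = i'}. b k') \<le> (R+1) * x i'"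
    proof (cases "i' = i")
      case True
      have e: "{k'\<in>K. \<sigma>' k' = i'} = insert k {k'\<in>K0. \<sigma> k' = i}"
        using True kK unfolding \<sigma>'_def K0_def by auto
      have "(\<Sum>k'\<in>{k'\<in>K. \<sigma>' k' = i'}. b k') = b k + (\<Sum>k'\<in>{k'\<in>K0. \<sigma> k' = i}. b k')"
        unfolding e using fK0 by (subst sum.insert) (auto simp: K0_def)
      thus ?thesis using fit True unfolding B_def by simp
    next
      case False
      have e: "{k'\<in>K. \<sigma>' k' = i'} = {k'\<in>K0. \<sigma> k' = i'}"
        using False kK unfolding \<sigma>'_def K0_def by auto
      show ?thesis unfolding e using sl i'm by auto
    qed
  qed
  moreover have "\<forall>k'\<in>K. \<sigma>' k' < m" using sm im unfolding \<sigma>'_def K0_def by auto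
  ultimately show ?case by blast
qed

lemma greedy:
  fixes b x :: "nat \<Rightarrow> nat" and R a :: real
  assumes "R \<ge> 1" "a \<ge> 1" "\<forall>k<m. a \<le> b k \<and> b k \<le> R*a + 1"
    and "(\<Sum>k<m. b k) = (\<Sum>i<m. x i)"
  shows "\<exists>\<sigma>. (\<forall>k<m. \<sigma> k < m) \<and>
           (\<forall>i<m. real (\<Sum>k\<in>{k. k<m \<and> \<sigma> k = i}. b k) \<le> (R+1) * x i)"
  using greedy_aux[OF assms, of "{..<m}" m] by auto

lemma robust_bags:
  fixes R a :: real
  assumes m: "1 \<le> m" and s: "\<forall>i<m. 0 < s i" and \<beta>: "\<forall>j<n. \<beta> j < m"
    and R: "R \<ge> 1" and a: "a \<ge> 1" and bnd: "\<forall>k<m. a \<le> sz n \<beta> k \<and> sz n \<beta> k \<le> R*a + 1"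
  shows "bag_makespan n m (\<lambda>_. 1) s \<beta> \<le> ereal (R+1) * opt n m (\<lambda>_. 1) s"
proof -
  obtain f where f: "f \<in> {..<n} \<rightarrow>\<^sub>E {..<m}" and fo: "opt n m (\<lambda>_. 1) s = makespan n m (\<lambda>_. 1) s f"
    using opt_attained[OF m] by blast
  define x where "x i = card {j. j < n \<and> f j = i}" for i
  have sx: "(\<Sum>i<m. x i) = n"
  proof -
    have "card {..<n} = (\<Sum>i\<in>{..<m}. card {j\<in>{..<n}. f j = i})"
      by (rule card_fibers) (use f in auto)
    also have "\<dots> = (\<Sum>i<m. x i)" unfolding x_def by (intro sum.cong) (auto intro: arg_cong[where f=card])
    finally show ?thesis by simp
  qed
  obtain \<sigma> where \<sigma>m: "\<forall>k<m. \<sigma> k < m"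
    and \<sigma>l: "\<forall>i<m. real (\<Sum>k\<in>{k. k<m \<and> \<sigma> k = i}. sz n \<beta> k) \<le> (R+1) * x i"
    using greedy[OF R a bnd, of x] sx sum_sz[OF \<beta>] by auto
  have "bag_makespan n m (\<lambda>_. 1) s \<beta> \<le> makespan n m (\<lambda>_. 1) s (\<sigma> \<circ> \<beta>)"
    by (rule bag_makespan_le'[OF \<sigma>m \<beta>])
  also have "\<dots> \<le> ereal (R+1) * opt n m (\<lambda>_. 1) s"
  proof (subst makespan_le_iff[OF m], intro allI impI)
    fix i assume im: "i < m"
    have ld: "load n (\<lambda>_. 1) (\<sigma> \<circ> \<beta>) i = real (\<Sum>k\<in>{k. k<m \<and> \<sigma> k = i}. sz n \<beta> k)"
      unfolding load_one using card_comp[OF \<beta>, of \<sigma> i] by (simp add: cload_def cset_def)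
    have si: "0 < s i" using s im by auto
    have "ptime (load n (\<lambda>_. 1) (\<sigma> \<circ> \<beta>) i) (s i) = ereal (load n (\<lambda>_. 1) (\<sigma> \<circ> \<beta>) i / s i)"
      using si by (simp add: ptime_def)
    also have "\<dots> \<le> ereal ((R+1) * x i / s i)"
      using \<sigma>l im si unfolding ld by (simp add: divide_right_mono)
    also have "\<dots> = ereal (R+1) * ptime (load n (\<lambda>_. 1) f i) (s i)"
      using si by (simp add: ptime_def load_one x_def)
    also have "\<dots> \<le> ereal (R+1) * makespan n m (\<lambda>_. 1) s f"
      using R by (intro ereal_mult_left_mono makespan_ge im) auto
    finally show "ptime (load n (\<lambda>_. 1) (\<sigma> \<circ> \<beta>) i) (s i) \<le> ereal (R+1) * opt n m (\<lambda>_. 1) s"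
      using fo by simp
  qed
  finally show ?thesis .
qed

lemma small_bags:
  assumes m: "1 \<le> m" and \<beta>: "\<forall>j<n. \<beta> j < m" and sm: "\<forall>k<m. sz n \<beta> k \<le> 1"
  shows "bag_makespan n m p sp \<beta> \<le> opt n m p sp"
proof -
  obtain f where f: "f \<in> {..<n} \<rightarrow>\<^sub>E {..<m}" and fo: "opt n m p sp = makespan n m p sp f"
    using opt_attained[OF m] by blast
  define \<sigma> where "\<sigma> k = (if bag n \<beta> k \<noteq> {} then f (THE j. j \<in> bag n \<beta> k) else 0)" for k
  have eq: "\<sigma> (\<beta> j) = f j" if j: "j < n" for j
  proof -
    have jin: "j \<in> bag n \<beta> (\<beta> j)" using j by (simp add: bag_def)
    have "card (bag n \<beta> (\<beta> j)) \<le> 1" using sm \<beta> j unfolding sz_def by auto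
    hence "bag n \<beta> (\<beta> j) = {j}" using jin
      by (simp add: card_le_Suc0_iff_eq) blast
    thus ?thesis unfolding \<sigma>_def by auto
  qed
  have \<sigma>m: "\<forall>k<m. \<sigma> k < m"
  proof (intro allI impI)
    fix k assume "k < m"
    show "\<sigma> k < m"
    proof (cases "bag n \<beta> k = {}")
      case True then show ?thesis using m by (simp add: \<sigma>_def)
    next
      case False
      then obtain j where "j \<in> bag n \<beta> k" by auto
      hence "j < n" "\<beta> j = k" by (auto simp: bag_def)
      then show ?thesis using eq f by auto
    qed
  qed
  have "bag_makespan n m p sp \<beta> \<le> makespan n m p sp (\<sigma> \<circ> \<beta>)"
    by (rule bag_makespan_le'[OF \<sigma>m \<beta>])
  also have "\<dots> = makespan n m p sp f" by (rule makespan_cong) (use eq in auto)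
  finally show ?thesis using fo by simp
qed

lemma lpt_bal:
  assumes lpt: "lpt_assign (\<lambda>_. 1) L js a" and k: "k \<in> L" and k': "k' \<in> L"
  shows "card {j \<in> set js. a j = k} \<le> card {j \<in> set js. a j = k'} + 1"
proof (cases "\<exists>t<length js. a (js ! t) = k")
  case False
  hence "{j \<in> set js. a j = k} = {}" by (auto simp: in_set_conv_nth)
  hence "card {j \<in> set js. a j = k} = 0" by (simp only: card.empty)
  thus ?thesis by linarith
next
  case True
  define t where "t = (GREATEST t. t < length js \<and> a (js ! t) = k)"
  have bnd: "\<forall>y. y < length js \<and> a (js ! y) = k \<longrightarrow> y \<le> length js" by auto
  have tP: "t < length js \<and> a (js ! t) = k"
  proof -
    obtain t0 where "t0 < length js \<and> a (js ! t0) = k" using True by auto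
    thus ?thesis unfolding t_def by (rule GreatestI_nat[where b="length js"]) auto
  qed
  have tmax: "\<And>u. u < length js \<Longrightarrow> a (js ! u) = k \<Longrightarrow> u \<le> t"
    unfolding t_def by (rule Greatest_le_nat[where b="length js"]) auto
  have dist: "distinct js" using lpt unfolding lpt_assign_def by auto
  have cond: "(\<Sum>j | j \<in> set (take t js) \<and> a j = a (js ! t). (1::real))
                 \<le> (\<Sum>j | j \<in> set (take t js) \<and> a j = k'. 1)"
    using lpt tP k' unfolding lpt_assign_def by auto
  hence c1: "card {j. j \<in> set (take t js) \<and> a j = k} \<le> card {j. j \<in> set (take t js) \<and> a j = k'}"
    using tP by simp
  have eqs: "{j \<in> set js. a j = k} = insert (js ! t) {j. j \<in> set (take t js) \<and> a j = k}"
  proof (rule set_eqI, rule iffI)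
    fix j assume "j \<in> {j \<in> set js. a j = k}"
    then obtain u where u: "u < length js" "js ! u = j" "a j = k" by (auto simp: in_set_conv_nth)
    have "u \<le> t" using tmax u by auto
    then show "j \<in> insert (js ! t) {j. j \<in> set (take t js) \<and> a j = k}"
    proof (cases "u = t")
      case False
      with \<open>u \<le> t\<close> have "u < t" by auto
      hence "j \<in> set (take t js)" using u by (auto simp: in_set_conv_nth)
      thus ?thesis using u by auto
    qed (use u in auto)
  next
    fix j assume "j \<in> insert (js ! t) {j. j \<in> set (take t js) \<and> a j = k}"
    thus "j \<in> {j \<in> set js. a j = k}" using tP by (auto dest: in_set_takeD)
  qed
  have notin: "js ! t \<notin> set (take t js)"
  proof
    assume "js ! t \<in> set (take t js)"
    then obtain u where u: "u < length (take t js)" "take t js ! u = js ! t" by (auto simp: in_set_conv_nth)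
    hence "u < t" "js ! u = js ! t" by auto
    thus False using nth_eq_iff_index_eq[OF dist, of u t] tP by auto
  qed
  have "card {j \<in> set js. a j = k} = Suc (card {j. j \<in> set (take t js) \<and> a j = k})"
    unfolding eqs using notin by (subst card_insert_disjoint) auto
  also have "\<dots> \<le> Suc (card {j. j \<in> set (take t js) \<and> a j = k'})" using c1 by simp
  also have "card {j. j \<in> set (take t js) \<and> a j = k'} \<le> card {j \<in> set js. a j = k'}"
    by (rule card_mono) (auto dest: in_set_takeD)
  finally show ?thesis by simp
qed

lemma msz_le: "k < m \<Longrightarrow> msz n m \<beta> \<le> sz n \<beta> k"
  unfolding msz_def by (rule Min_le) auto

lemma msz_in: "1 \<le> m \<Longrightarrow> \<exists>k<m. msz n m \<beta> = sz n \<beta> k"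
proof -
  assume "1 \<le> m"
  hence "msz n m \<beta> \<in> sz n \<beta> ` {..<m}" unfolding msz_def by (intro Min_in) (auto simp: lessThan_empty_iff)
  thus ?thesis by auto
qed

lemma msz_ge: "1 \<le> m \<Longrightarrow> (\<forall>k<m. x \<le> sz n \<beta> k) \<Longrightarrow> x \<le> msz n m \<beta>"
  using msz_in by metis

lemma coll_lower:
  assumes bal: "\<forall>k<m. \<forall>k'<m. c k = c k' \<longrightarrow> sz n \<beta> k \<le> sz n \<beta> k' + 1" and km: "kmax < m"
  shows "real (cload n m \<beta> c (c kmax)) \<ge> real (card (cset m c (c kmax))) * (real (sz n \<beta> kmax) - 1) + 1
         \<or> sz n \<beta> kmax = 0"
proof (cases "sz n \<beta> kmax = 0")
  case False
  let ?C = "cset m c (c kmax)"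
  have kin: "kmax \<in> ?C" using km by (simp add: cset_def)
  have eq: "real (cload n m \<beta> c (c kmax)) = real (sz n \<beta> kmax) + (\<Sum>k\<in>?C - {kmax}. real (sz n \<beta> k))"
    unfolding cload_def using kin by (simp add: sum.remove)
  have ge: "(\<Sum>k\<in>?C - {kmax}. real (sz n \<beta> k)) \<ge> (\<Sum>k\<in>?C - {kmax}. real (sz n \<beta> kmax) - 1)"
    using bal km by (intro sum_mono) (force simp: cset_def)
  have cc: "(\<Sum>k\<in>?C - {kmax}. real (sz n \<beta> kmax) - 1) = (real (card ?C) - 1) * (real (sz n \<beta> kmax) - 1)"
  proof -
    have "card ?C \<ge> 1" using kin by (metis One_nat_def Suc_leI card_gt_0_iff empty_iff finite_cset)
    thus ?thesis using kin by (simp add: card_Diff_singleton of_nat_diff)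
  qed
  have "real (cload n m \<beta> c (c kmax)) \<ge> real (sz n \<beta> kmax) + (real (card ?C) - 1) * (real (sz n \<beta> kmax) - 1)"
    using eq ge cc by linarith
  hence "real (cload n m \<beta> c (c kmax)) \<ge> real (card ?C) * (real (sz n \<beta> kmax) - 1) + 1"
    by (simp add: algebra_simps)
  thus ?thesis by simp
qed simp

lemma step_core:
  assumes m: "1 \<le> m" and \<beta>m: "\<forall>j<n. \<beta> j < m" and cm: "\<forall>k<m. c k < m"
    and bal: "\<forall>k<m. \<forall>k'<m. c k = c k' \<longrightarrow> sz n \<beta> k \<le> sz n \<beta> k' + 1"
    and lc: "loop_cond n m (\<lambda>_. 1) 2 \<beta>" and rb: "lpt_rebalance n m (\<lambda>_. 1) (\<beta>, c) (\<beta>', c')"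
  shows "\<exists>kmin kmax. kmin < m \<and> kmax < m \<and> c' = c(kmin := c kmax) \<and> c kmin \<noteq> c kmax
    \<and> sz n \<beta> kmin = msz n m \<beta> \<and> 2 \<le> sz n \<beta> kmax \<and> 2 * msz n m \<beta> < sz n \<beta> kmax
    \<and> (\<forall>k<m. 2 \<le> sz n \<beta> k \<longrightarrow> sz n \<beta> k \<le> sz n \<beta> kmax)
    \<and> (\<forall>j<n. \<beta>' j < m)
    \<and> (\<forall>k<m. c k \<noteq> c kmax \<and> k \<noteq> kmin \<longrightarrow> sz n \<beta>' k = sz n \<beta> k)
    \<and> (\<forall>k<m. (c k = c kmax \<or> k = kmin) \<longrightarrow> msz n m \<beta> + 1 \<le> sz n \<beta>' k)
    \<and> (\<forall>k<m. \<forall>k'<m. (c k = c kmax \<or> k = kmin) \<longrightarrow> (c k' = c kmax \<or> k' = kmin) \<longrightarrow> sz n \<beta>' k \<le> sz n \<beta>' k' + 1)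
    \<and> (\<Sum>k\<in>insert kmin (cset m c (c kmax)). sz n \<beta>' k) = (\<Sum>k\<in>insert kmin (cset m c (c kmax)). sz n \<beta> k)"
proof -
  obtain kmin kmax js where
    kmin: "kmin < m" and kminle: "\<forall>k<m. psum (\<lambda>_. 1) (bag n \<beta> kmin) \<le> psum (\<lambda>_. 1) (bag n \<beta> k)"
    and kmax: "kmax < m" and kmax2: "card (bag n \<beta> kmax) \<ge> 2"
    and kmaxge: "\<forall>k<m. card (bag n \<beta> k) \<ge> 2 \<longrightarrow> psum (\<lambda>_. 1) (bag n \<beta> k) \<le> psum (\<lambda>_. 1) (bag n \<beta> kmax)"
    and c': "c' = c(kmin := c kmax)"
    and js: "set js = {j. j < n \<and> \<beta> j \<in> {k. k < m \<and> c' k = c kmax}}"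
    and lpt: "lpt_assign (\<lambda>_. 1) {k. k < m \<and> c' k = c kmax} js \<beta>'"
    and oth: "\<forall>j. j < n \<and> j \<notin> set js \<longrightarrow> \<beta>' j = \<beta> j"
    using rb unfolding lpt_rebalance_def Let_def by auto
  define Ls where "Ls = {k. k < m \<and> c' k = c kmax}"
  have Ls: "Ls = insert kmin (cset m c (c kmax))" unfolding Ls_def c' cset_def using kmin by auto
  have Lsm: "Ls \<subseteq> {..<m}" unfolding Ls_def by auto
  have finLs: "finite Ls" using Lsm finite_subset by auto
  have kminle': "\<forall>k<m. sz n \<beta> kmin \<le> sz n \<beta> k" using kminle by (simp add: psum_bag)
  have kmaxge': "\<forall>k<m. 2 \<le> sz n \<beta> k \<longrightarrow> sz n \<beta> k \<le> sz n \<beta> kmax"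
    using kmaxge by (simp add: psum_bag sz_def)
  have mszk: "sz n \<beta> kmin = msz n m \<beta>"
    using msz_le[OF kmin, of n \<beta>] msz_ge[OF m kminle'] by simp
  have kmax2': "2 \<le> sz n \<beta> kmax" using kmax2 by (simp add: sz_def)
  define K2 where "K2 = {k. k < m \<and> card (bag n \<beta> k) \<ge> 2}"
  have lc': "Max ((\<lambda>k. psum (\<lambda>_. 1) (bag n \<beta> k)) ` K2) > 2 * Min ((\<lambda>k. psum (\<lambda>_. 1) (bag n \<beta> k)) ` {..<m})"
    using lc unfolding loop_cond_def Let_def K2_def by auto
  have mx: "Max ((\<lambda>k. psum (\<lambda>_. 1) (bag n \<beta> k)) ` K2) = psum (\<lambda>_. 1) (bag n \<beta> kmax)"
    by (rule Max_eqI) (use kmax kmax2 kmaxge in \<open>auto simp: K2_def\<close>)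
  have mn: "Min ((\<lambda>k. psum (\<lambda>_. 1) (bag n \<beta> k)) ` {..<m}) = psum (\<lambda>_. 1) (bag n \<beta> kmin)"
    by (rule Min_eqI) (use kmin kminle in auto)
  have big: "2 * msz n m \<beta> < sz n \<beta> kmax"
  proof -
    have "psum (\<lambda>_. 1) (bag n \<beta> kmax) > 2 * psum (\<lambda>_. 1) (bag n \<beta> kmin)"
      using lc' by (simp only: mx mn)
    thus ?thesis unfolding psum_bag mszk[symmetric] by linarith
  qed
  have cne: "c kmin \<noteq> c kmax"
  proof
    assume "c kmin = c kmax"
    hence "sz n \<beta> kmax \<le> sz n \<beta> kmin + 1" using bal kmin kmax by auto
    thus False using big kmax2' mszk by linarith
  qed
  have \<beta>'Ls: "\<forall>j\<in>set js. \<beta>' j \<in> Ls"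
  proof
    fix j assume "j \<in> set js"
    then obtain t where "t < length js" "js ! t = j" by (auto simp: in_set_conv_nth)
    thus "\<beta>' j \<in> Ls" using lpt unfolding lpt_assign_def Ls_def by auto
  qed
  have \<beta>'m: "\<forall>j<n. \<beta>' j < m"
  proof (intro allI impI)
    fix j assume jn: "j < n"
    show "\<beta>' j < m"
    proof (cases "j \<in> set js")
      case True thus ?thesis using \<beta>'Ls Lsm by auto
    next
      case False thus ?thesis using oth \<beta>m jn by auto
    qed
  qed
  have bagLs: "bag n \<beta>' k = {j \<in> set js. \<beta>' j = k}" if "k \<in> Ls" for k
  proof -
    have "j \<in> set js" if "j < n" "\<beta>' j = k" for j
    proof (rule ccontr)
      assume nj: "j \<notin> set js"
      hence "\<beta> j = k" using oth that by auto
      hence "j \<in> set js" using js that \<open>k \<in> Ls\<close> unfolding Ls_def by auto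
      thus False using nj by simp
    qed
    moreover have "set js \<subseteq> {..<n}" using js by auto
    ultimately show ?thesis unfolding bag_def by auto
  qed
  have bagout: "bag n \<beta>' k = bag n \<beta> k" if "k < m" "k \<notin> Ls" for k
  proof -
    have "\<beta>' j = k \<longleftrightarrow> \<beta> j = k" if "j < n" for j
    proof (cases "j \<in> set js")
      case True
      hence "\<beta>' j \<in> Ls" "\<beta> j \<in> Ls" using \<beta>'Ls js unfolding Ls_def by auto
      thus ?thesis using \<open>k \<notin> Ls\<close> by auto
    next
      case False thus ?thesis using oth that by auto
    qed
    thus ?thesis unfolding bag_def by auto
  qed
  have szout: "\<forall>k<m. c k \<noteq> c kmax \<and> k \<noteq> kmin \<longrightarrow> sz n \<beta>' k = sz n \<beta> k"
    using bagout unfolding Ls sz_def cset_def by auto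
  have balLs: "\<forall>k\<in>Ls. \<forall>k'\<in>Ls. sz n \<beta>' k \<le> sz n \<beta>' k' + 1"
    using lpt_bal[OF lpt[folded Ls_def]] bagLs unfolding sz_def by auto
  have sumeq: "(\<Sum>k\<in>Ls. sz n \<beta>' k) = (\<Sum>k\<in>Ls. sz n \<beta> k)"
  proof -
    have "(\<Sum>k\<in>Ls. sz n \<beta>' k) = (\<Sum>k\<in>Ls. card {j \<in> set js. \<beta>' j = k})"
      using bagLs unfolding sz_def by simp
    also have "\<dots> = card (set js)"
      by (rule card_fibers[symmetric]) (use finLs \<beta>'Ls in auto)
    also have "\<dots> = (\<Sum>k\<in>Ls. card {j \<in> set js. \<beta> j = k})"
      by (rule card_fibers) (use finLs js Ls_def in auto)
    also have "\<dots> = (\<Sum>k\<in>Ls. sz n \<beta> k)"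
      unfolding sz_def bag_def js Ls_def by (intro sum.cong) (auto intro: arg_cong[where f=card])
    finally show ?thesis .
  qed
  have lower: "msz n m \<beta> + 1 \<le> sz n \<beta>' k" if kLs: "k \<in> Ls" for k
  proof (rule ccontr)
    assume "\<not> ?thesis"
    hence yk: "sz n \<beta>' k \<le> msz n m \<beta>" by simp
    let ?C = "cset m c (c kmax)"
    have kminC: "kmin \<notin> ?C" using cne by (simp add: cset_def)
    have kC: "kmax \<in> ?C" using kmax by (simp add: cset_def)
    have cl: "real (cload n m \<beta> c (c kmax)) \<ge> real (card ?C) * (real (sz n \<beta> kmax) - 1) + 1"
      using coll_lower[OF bal kmax] kmax2' by auto
    have "(\<Sum>k\<in>Ls. sz n \<beta> k) = msz n m \<beta> + cload n m \<beta> c (c kmax)"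
      unfolding Ls cload_def using kminC mszk by simp
    moreover have "(\<Sum>k'\<in>Ls. sz n \<beta>' k') \<le> sz n \<beta>' k + (\<Sum>k'\<in>Ls - {k}. sz n \<beta>' k + 1)"
    proof -
      have "(\<Sum>k'\<in>Ls. sz n \<beta>' k') = sz n \<beta>' k + (\<Sum>k'\<in>Ls - {k}. sz n \<beta>' k')"
        using kLs finLs by (simp add: sum.remove)
      also have "(\<Sum>k'\<in>Ls - {k}. sz n \<beta>' k') \<le> (\<Sum>k'\<in>Ls - {k}. sz n \<beta>' k + 1)"
        using balLs kLs by (intro sum_mono) auto
      finally show ?thesis by simp
    qed
    moreover have "card (Ls - {k}) = card ?C" using kLs finLs kminC unfolding Ls by (simp add: card_insert_disjoint)
    ultimately have "msz n m \<beta> + cload n m \<beta> c (c kmax) \<le> sz n \<beta>' k + card ?C * (sz n \<beta>' k + 1)"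
      using sumeq by simp
    hence "cload n m \<beta> c (c kmax) \<le> card ?C * (msz n m \<beta> + 1)"
    proof -
      have "sz n \<beta>' k + card ?C * (sz n \<beta>' k + 1) \<le> msz n m \<beta> + card ?C * (msz n m \<beta> + 1)"
        using yk by (intro add_mono mult_le_mono2) auto
      thus ?thesis using \<open>msz n m \<beta> + cload n m \<beta> c (c kmax) \<le> sz n \<beta>' k + card ?C * (sz n \<beta>' k + 1)\<close> by linarith
    qed
    hence r1: "real (cload n m \<beta> c (c kmax)) \<le> real (card ?C) * (real (msz n m \<beta>) + 1)"
      by (metis of_nat_add of_nat_le_iff of_nat_mult of_nat_1)
    have "msz n m \<beta> + 2 \<le> sz n \<beta> kmax" using big kmax2' by linarith
    hence "real (msz n m \<beta>) + 1 \<le> real (sz n \<beta> kmax) - 1" by linarith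
    hence "real (card ?C) * (real (msz n m \<beta>) + 1) \<le> real (card ?C) * (real (sz n \<beta> kmax) - 1)"
      by (intro mult_left_mono) auto
    thus False using r1 cl by linarith
  qed
  show ?thesis
    apply (rule exI[of _ kmin], rule exI[of _ kmax])
    using kmin kmax c' cne mszk kmax2' big kmaxge' \<beta>'m szout sumeq[unfolded Ls]
    using lower balLs unfolding Ls cset_def by auto
qed

definition inv_basic :: "nat \<Rightarrow> nat \<Rightarrow> (nat \<Rightarrow> nat) \<times> (nat \<Rightarrow> nat) \<Rightarrow> bool" where
  "inv_basic n m st \<longleftrightarrow> (\<forall>j<n. fst st j < m) \<and> (\<forall>k<m. snd st k < m) \<and>
     (\<forall>k<m. \<forall>k'<m. snd st k = snd st k' \<longrightarrow> sz n (fst st) k \<le> sz n (fst st) k' + 1)"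

lemma basic_step:
  assumes m: "1 \<le> m" and inv: "inv_basic n m (\<beta>, c)" and lc: "loop_cond n m (\<lambda>_. 1) 2 \<beta>"
    and rb: "lpt_rebalance n m (\<lambda>_. 1) (\<beta>, c) (\<beta>', c')"
  shows "inv_basic n m (\<beta>', c') \<and> msz n m \<beta> \<le> msz n m \<beta>' \<and>
    (msz n m \<beta> < msz n m \<beta>' \<or> card {k. k < m \<and> sz n \<beta>' k = msz n m \<beta>'} < card {k. k < m \<and> sz n \<beta> k = msz n m \<beta>})"
proof -
  have \<beta>m: "\<forall>j<n. \<beta> j < m" and cm: "\<forall>k<m. c k < m"
    and bal: "\<forall>k<m. \<forall>k'<m. c k = c k' \<longrightarrow> sz n \<beta> k \<le> sz n \<beta> k' + 1"
    using inv unfolding inv_basic_def by auto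
  obtain kmin kmax where kmin: "kmin < m" and kmax: "kmax < m" and c': "c' = c(kmin := c kmax)"
    and cne: "c kmin \<noteq> c kmax" and mszk: "sz n \<beta> kmin = msz n m \<beta>"
    and \<beta>'m: "\<forall>j<n. \<beta>' j < m"
    and szout: "\<forall>k<m. c k \<noteq> c kmax \<and> k \<noteq> kmin \<longrightarrow> sz n \<beta>' k = sz n \<beta> k"
    and lower: "\<forall>k<m. (c k = c kmax \<or> k = kmin) \<longrightarrow> msz n m \<beta> + 1 \<le> sz n \<beta>' k"
    and balL: "\<forall>k<m. \<forall>k'<m. (c k = c kmax \<or> k = kmin) \<longrightarrow> (c k' = c kmax \<or> k' = kmin) \<longrightarrow> sz n \<beta>' k \<le> sz n \<beta>' k' + 1"
    using step_core[OF m \<beta>m cm bal lc rb] by blast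
  have c'm: "\<forall>k<m. c' k < m" using cm kmax unfolding c' by auto
  have bal': "\<forall>k<m. \<forall>k'<m. c' k = c' k' \<longrightarrow> sz n \<beta>' k \<le> sz n \<beta>' k' + 1"
  proof (intro allI impI)
    fix k k' assume km: "k < m" and k'm: "k' < m" and eq: "c' k = c' k'"
    show "sz n \<beta>' k \<le> sz n \<beta>' k' + 1"
    proof (cases "c k = c kmax \<or> k = kmin")
      case True
      hence "c k' = c kmax \<or> k' = kmin" using eq unfolding c' by (auto split: if_splits)
      thus ?thesis using balL True km k'm by auto
    next
      case False
      hence F': "c k' \<noteq> c kmax \<and> k' \<noteq> kmin" "c k = c k'" using eq unfolding c' by (auto split: if_splits)
      thus ?thesis using False szout bal km k'm by auto
    qed
  qed
  have allge: "\<forall>k<m. msz n m \<beta> \<le> sz n \<beta>' k"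
  proof (intro allI impI)
    fix k assume km: "k < m"
    show "msz n m \<beta> \<le> sz n \<beta>' k"
    proof (cases "c k = c kmax \<or> k = kmin")
      case True thus ?thesis using lower km by fastforce
    next
      case False thus ?thesis using szout km msz_le[OF km, of n \<beta>] by auto
    qed
  qed
  have mono: "msz n m \<beta> \<le> msz n m \<beta>'" using msz_ge[OF m allge] .
  have dec: "msz n m \<beta> < msz n m \<beta>' \<or> card {k. k < m \<and> sz n \<beta>' k = msz n m \<beta>'} < card {k. k < m \<and> sz n \<beta> k = msz n m \<beta>}"
  proof (cases "msz n m \<beta> = msz n m \<beta>'")
    case True
    have sub: "{k. k < m \<and> sz n \<beta>' k = msz n m \<beta>'} \<subset> {k. k < m \<and> sz n \<beta> k = msz n m \<beta>}"
    proof
      show "{k. k < m \<and> sz n \<beta>' k = msz n m \<beta>'} \<subseteq> {k. k < m \<and> sz n \<beta> k = msz n m \<beta>}"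
      proof
        fix k assume "k \<in> {k. k < m \<and> sz n \<beta>' k = msz n m \<beta>'}"
        hence km: "k < m" and e: "sz n \<beta>' k = msz n m \<beta>" using True by auto
        have "\<not> (c k = c kmax \<or> k = kmin)" using lower km e by fastforce
        thus "k \<in> {k. k < m \<and> sz n \<beta> k = msz n m \<beta>}" using szout km e by auto
      qed
      have "kmin \<notin> {k. k < m \<and> sz n \<beta>' k = msz n m \<beta>'}" using lower kmin True by fastforce
      moreover have "kmin \<in> {k. k < m \<and> sz n \<beta> k = msz n m \<beta>}" using kmin mszk by auto
      ultimately show "{k. k < m \<and> sz n \<beta>' k = msz n m \<beta>'} \<noteq> {k. k < m \<and> sz n \<beta> k = msz n m \<beta>}" by blast
    qed
    have "finite {k. k < m \<and> sz n \<beta> k = msz n m \<beta>}" by auto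
    thus ?thesis using psubset_card_mono[OF _ sub] by auto
  qed (use mono in auto)
  show ?thesis using \<beta>'m c'm bal' mono dec unfolding inv_basic_def by auto
qed

definition mu :: "nat \<Rightarrow> nat \<Rightarrow> (nat \<Rightarrow> nat) \<Rightarrow> nat" where
  "mu n m \<beta> = (n - msz n m \<beta>) * (m + 1) + card {k. k < m \<and> sz n \<beta> k = msz n m \<beta>}"

lemma msz_le_n: "1 \<le> m \<Longrightarrow> msz n m \<beta> \<le> n"
proof -
  assume m: "1 \<le> m"
  have "msz n m \<beta> \<le> sz n \<beta> 0" using m by (intro msz_le) auto
  also have "\<dots> \<le> card {..<n}" unfolding sz_def bag_def by (rule card_mono) auto
  finally show ?thesis by simp
qed

lemma card_min_le: "card {k. k < m \<and> P k} \<le> m"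
  using card_mono[of "{..<m}" "{k. k < m \<and> P k}"] by auto

lemma mu_dec:
  assumes m: "1 \<le> m" and inv: "inv_basic n m (\<beta>, c)" and lc: "loop_cond n m (\<lambda>_. 1) 2 \<beta>"
    and rb: "lpt_rebalance n m (\<lambda>_. 1) (\<beta>, c) (\<beta>', c')"
  shows "inv_basic n m (\<beta>', c') \<and> mu n m \<beta>' < mu n m \<beta>"
proof -
  note bs = basic_step[OF assms]
  have "mu n m \<beta>' < mu n m \<beta>"
  proof (cases "msz n m \<beta> < msz n m \<beta>'")
    case True
    have l1: "msz n m \<beta>' \<le> n" "msz n m \<beta> \<le> n" using msz_le_n[OF m] by auto
    have "n - msz n m \<beta>' + 1 \<le> n - msz n m \<beta>" using True l1 by linarith
    hence "(n - msz n m \<beta>' + 1) * (m+1) \<le> (n - msz n m \<beta>) * (m+1)" by (rule mult_right_mono) auto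
    moreover have "card {k. k < m \<and> sz n \<beta>' k = msz n m \<beta>'} \<le> m" by (rule card_min_le)
    ultimately show ?thesis unfolding mu_def by (simp add: algebra_simps)
  next
    case False
    hence "msz n m \<beta> = msz n m \<beta>'" using bs by auto
    thus ?thesis using bs False unfolding mu_def by auto
  qed
  thus ?thesis using bs by auto
qed

lemma terminates:
  assumes m: "1 \<le> m" and inv0: "inv_basic n m st0"
  shows "\<not> (\<exists>f. f 0 = st0 \<and> (\<forall>k. ipr_step n m (\<lambda>_. 1) sh \<alpha> 2 OPTC (f k) (f (Suc k))))"
proof
  assume "\<exists>f. f 0 = st0 \<and> (\<forall>k. ipr_step n m (\<lambda>_. 1) sh \<alpha> 2 OPTC (f k) (f (Suc k)))"
  then obtain f where f0: "f 0 = st0" and fs: "\<forall>k. ipr_step n m (\<lambda>_. 1) sh \<alpha> 2 OPTC (f k) (f (Suc k))" by blast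
  have "inv_basic n m (f k) \<and> mu n m (fst (f k)) + k \<le> mu n m (fst (f 0))" for k
  proof (induction k)
    case 0 thus ?case using inv0 f0 by simp
  next
    case (Suc k)
    have st: "loop_cond n m (\<lambda>_. 1) 2 (fst (f k))" "lpt_rebalance n m (\<lambda>_. 1) (fst (f k), snd (f k)) (fst (f (Suc k)), snd (f (Suc k)))"
      using fs[rule_format, of k] unfolding ipr_step_def by auto
    have "inv_basic n m (fst (f (Suc k)), snd (f (Suc k))) \<and> mu n m (fst (f (Suc k))) < mu n m (fst (f k))"
      using mu_dec[OF m _ st] Suc.IH by auto
    thus ?case using Suc.IH by auto
  qed
  from this[of "Suc (mu n m (fst (f 0)))"] show False by auto
qed

lemma coll_load:
  assumes "\<forall>j<n. \<beta> j < m"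
  shows "load n (\<lambda>_. 1) (c \<circ> \<beta>) i = real (cload n m \<beta> c i)"
  unfolding load_one using card_comp[OF assms, of c i] by simp

lemma coll_le_iff:
  assumes m: "1 \<le> m" and \<beta>: "\<forall>j<n. \<beta> j < m"
  shows "coll_makespan n m (\<lambda>_. 1) sh (\<beta>, c) \<le> Y \<longleftrightarrow> (\<forall>i<m. ptime (real (cload n m \<beta> c i)) (sh i) \<le> Y)"
  unfolding coll_makespan_def using makespan_le_iff[OF m] coll_load[OF \<beta>] by simp

lemma cload_step:
  assumes kmin: "kmin < m" and kmax: "kmax < m" and c': "c' = c(kmin := c kmax)"
    and cne: "c kmin \<noteq> c kmax" and mszk: "sz n \<beta> kmin = a"
    and szout: "\<forall>k<m. c k \<noteq> c kmax \<and> k \<noteq> kmin \<longrightarrow> sz n \<beta>' k = sz n \<beta> k"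
    and sumeq: "(\<Sum>k\<in>insert kmin (cset m c (c kmax)). sz n \<beta>' k) = (\<Sum>k\<in>insert kmin (cset m c (c kmax)). sz n \<beta> k)"
  shows "cload n m \<beta>' c' (c kmax) = cload n m \<beta> c (c kmax) + a"
    and "card (cset m c' (c kmax)) = card (cset m c (c kmax)) + 1"
    and "i \<noteq> c kmax \<Longrightarrow> cload n m \<beta>' c' i + (if i = c kmin then a else 0) = cload n m \<beta> c i"
    and "i \<noteq> c kmax \<Longrightarrow> card (cset m c' i) + (if i = c kmin then 1 else 0) = card (cset m c i)"
proof -
  have kn: "kmin \<notin> cset m c (c kmax)" using cne by (simp add: cset_def)
  have cs0: "cset m c' (c kmax) = insert kmin (cset m c (c kmax))"
    using kmin unfolding c' cset_def by auto
  show "cload n m \<beta>' c' (c kmax) = cload n m \<beta> c (c kmax) + a"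
    unfolding cload_def cs0 sumeq using kn mszk by simp
  show "card (cset m c' (c kmax)) = card (cset m c (c kmax)) + 1"
    unfolding cs0 using kn by simp
  assume ine: "i \<noteq> c kmax"
  have cs1: "cset m c' i = cset m c i - {kmin}" using ine unfolding c' cset_def by auto
  have szeq: "(\<Sum>k\<in>cset m c' i. sz n \<beta>' k) = (\<Sum>k\<in>cset m c' i. sz n \<beta> k)"
    using szout ine unfolding cs1 by (intro sum.cong) (auto simp: cset_def)
  hence cl: "cload n m \<beta>' c' i = (\<Sum>k\<in>cset m c i - {kmin}. sz n \<beta> k)" unfolding cload_def cs1 .
  show "cload n m \<beta>' c' i + (if i = c kmin then a else 0) = cload n m \<beta> c i"
  proof (cases "i = c kmin")
    case True
    have "kmin \<in> cset m c i" using True kmin by (simp add: cset_def)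
    thus ?thesis unfolding cl using True mszk by (simp add: sum.remove cload_def)
  next
    case False
    hence "kmin \<notin> cset m c i" by (simp add: cset_def)
    thus ?thesis unfolding cl using False by (simp add: cload_def)
  qed
  show "card (cset m c' i) + (if i = c kmin then 1 else 0) = card (cset m c i)"
  proof (cases "i = c kmin")
    case True
    have "kmin \<in> cset m c i" using True kmin by (simp add: cset_def)
    thus ?thesis unfolding cs1 using True
      by (simp add: card_Diff_singleton) (metis card_gt_0_iff empty_iff finite_cset Suc_pred)
  next
    case False
    hence "kmin \<notin> cset m c i" by (simp add: cset_def)
    thus ?thesis unfolding cs1 using False by simp
  qed
qed

definition pot :: "nat \<Rightarrow> nat \<Rightarrow> (nat \<Rightarrow> real) \<Rightarrow> ereal \<Rightarrow> (nat \<Rightarrow> nat) \<times> (nat \<Rightarrow> nat) \<Rightarrow> bool" where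
  "pot n m sh OPTC st \<longleftrightarrow> (\<forall>Oc. OPTC = ereal Oc \<longrightarrow> (\<forall>i<m. cset m (snd st) i \<noteq> {} \<longrightarrow>
     real (cload n m (fst st) (snd st) i) \<le> Oc * sh i + (real (card (cset m (snd st) i)) - 1) * real (msz n m (fst st))))"

definition inv_full :: "nat \<Rightarrow> nat \<Rightarrow> (nat \<Rightarrow> real) \<Rightarrow> real \<Rightarrow> ereal \<Rightarrow> (nat \<Rightarrow> nat) \<times> (nat \<Rightarrow> nat) \<Rightarrow> bool" where
  "inv_full n m sh \<alpha> OPTC st \<longleftrightarrow> inv_basic n m st \<and> coll_makespan n m (\<lambda>_. 1) sh st \<le> ereal (1 + \<alpha>) * OPTC
     \<and> pot n m sh OPTC st"

lemma card_ge1: "cset m c i \<noteq> {} \<Longrightarrow> real (card (cset m c i)) \<ge> 1"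
  by (metis One_nat_def Suc_leI card_gt_0_iff finite_cset of_nat_1 of_nat_le_iff)

lemma full_step:
  assumes m: "1 \<le> m" and inv: "inv_full n m sh \<alpha> OPTC (\<beta>, c)"
    and st: "ipr_step n m (\<lambda>_. 1) sh \<alpha> 2 OPTC (\<beta>, c) (\<beta>', c')"
  shows "inv_full n m sh \<alpha> OPTC (\<beta>', c')"
proof -
  have ib: "inv_basic n m (\<beta>, c)" and pt: "pot n m sh OPTC (\<beta>, c)" using inv unfolding inv_full_def by auto
  have lc: "loop_cond n m (\<lambda>_. 1) 2 \<beta>" and rb: "lpt_rebalance n m (\<lambda>_. 1) (\<beta>, c) (\<beta>', c')"
    and nr: "\<not> coll_makespan n m (\<lambda>_. 1) sh (\<beta>', c') > ereal (1 + \<alpha>) * OPTC"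
    using st unfolding ipr_step_def by auto
  have \<beta>m: "\<forall>j<n. \<beta> j < m" and cm: "\<forall>k<m. c k < m"
    and bal: "\<forall>k<m. \<forall>k'<m. c k = c k' \<longrightarrow> sz n \<beta> k \<le> sz n \<beta> k' + 1"
    using ib unfolding inv_basic_def by auto
  obtain kmin kmax where kmin: "kmin < m" and kmax: "kmax < m" and c': "c' = c(kmin := c kmax)"
    and cne: "c kmin \<noteq> c kmax" and mszk: "sz n \<beta> kmin = msz n m \<beta>"
    and szout: "\<forall>k<m. c k \<noteq> c kmax \<and> k \<noteq> kmin \<longrightarrow> sz n \<beta>' k = sz n \<beta> k"
    and sumeq: "(\<Sum>k\<in>insert kmin (cset m c (c kmax)). sz n \<beta>' k) = (\<Sum>k\<in>insert kmin (cset m c (c kmax)). sz n \<beta> k)"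
    using step_core[OF m \<beta>m cm bal lc rb] by blast
  note cs = cload_step[OF kmin kmax c' cne mszk szout sumeq]
  have bs: "inv_basic n m (\<beta>', c')" "msz n m \<beta> \<le> msz n m \<beta>'" using basic_step[OF m ib lc rb] by auto
  define a where "a = real (msz n m \<beta>)"
  define a' where "a' = real (msz n m \<beta>')"
  have aa': "a \<le> a'" using bs unfolding a_def a'_def by simp
  have a0: "0 \<le> a" unfolding a_def by simp
  have "pot n m sh OPTC (\<beta>', c')"
    unfolding pot_def fst_conv snd_conv
  proof (intro allI impI)
    fix Oc i assume Oc: "OPTC = ereal Oc" and im: "i < m" and ne: "cset m c' i \<noteq> {}"
    have IH: "\<And>i. i < m \<Longrightarrow> cset m c i \<noteq> {} \<Longrightarrow> real (cload n m \<beta> c i) \<le> Oc * sh i + (real (card (cset m c i)) - 1) * a"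
      using pt Oc unfolding pot_def a_def by auto
    have l1: "real (card (cset m c' i)) \<ge> 1" using card_ge1[OF ne] .
    have "real (cload n m \<beta>' c' i) \<le> Oc * sh i + (real (card (cset m c' i)) - 1) * a'"
    proof (cases "i = c kmax")
      case True
      have ne0: "cset m c i \<noteq> {}" using True kmax by (auto simp: cset_def)
      have e1: "real (cload n m \<beta>' c' i) = real (cload n m \<beta> c i) + a"
        using cs(1) True unfolding a_def by simp
      have e2: "real (card (cset m c' i)) = real (card (cset m c i)) + 1" using cs(2) True by simp
      have p1: "real (card (cset m c i)) * a \<le> real (card (cset m c i)) * a'" using aa' by (intro mult_left_mono) auto
      have p2: "(real (card (cset m c' i)) - 1) * a' = real (card (cset m c i)) * a'" using e2 by simp
      have p3: "(real (card (cset m c i)) - 1) * a = real (card (cset m c i)) * a - a" by (simp add: algebra_simps)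
      show ?thesis using IH[OF im ne0] e1 p1 p2 p3 by linarith
    next
      case False
      note f3 = cs(3)[OF False] and f4 = cs(4)[OF False]
      show ?thesis
      proof (cases "i = c kmin")
        case True
        have ne0: "cset m c i \<noteq> {}" using True kmin by (auto simp: cset_def)
        have n1: "cload n m \<beta>' c' i + msz n m \<beta> = cload n m \<beta> c i" using f3 True by simp
        have e1: "real (cload n m \<beta>' c' i) + a = real (cload n m \<beta> c i)"
          unfolding a_def by (simp add: n1[symmetric])
        have n2: "card (cset m c' i) + 1 = card (cset m c i)" using f4 True by simp
        have e2: "real (card (cset m c' i)) + 1 = real (card (cset m c i))"
          by (simp add: n2[symmetric])
        have p1: "(real (card (cset m c' i)) - 1) * a \<le> (real (card (cset m c' i)) - 1) * a'"
          using aa' l1 by (intro mult_left_mono) auto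
        have p2: "(real (card (cset m c i)) - 1) * a = (real (card (cset m c' i)) - 1) * a + a"
          using e2[symmetric] by (simp add: algebra_simps)
        show ?thesis using IH[OF im ne0] e1 p1 p2 by linarith
      next
        case F2: False
        have ne0: "cset m c i \<noteq> {}" using ne f4 F2 by auto
        have e1: "cload n m \<beta>' c' i = cload n m \<beta> c i" using f3 F2 by simp
        have e2: "card (cset m c' i) = card (cset m c i)" using f4 F2 by simp
        have p1: "(real (card (cset m c' i)) - 1) * a \<le> (real (card (cset m c' i)) - 1) * a'"
          using aa' l1 by (intro mult_left_mono) auto
        show ?thesis using IH[OF im ne0] e1 e2 p1 by simp
      qed
    qed
    thus "real (cload n m \<beta>' c' i) \<le> Oc * sh i + (real (card (cset m c' i)) - 1) * real (msz n m \<beta>')"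
      unfolding a'_def .
  qed
  thus ?thesis using bs nr unfolding inv_full_def by (simp add: not_less)
qed

lemma alg:
  fixes \<alpha> l a L X b :: real
  assumes "\<alpha> > 0" "l \<ge> 1" "a \<ge> 0" "L + a > (1+\<alpha>)*X" "L \<le> X + (l-1)*a" "L \<ge> l*(b-1)+1"
  shows "b \<le> (1 + 1/\<alpha>) * a + 1"
proof -
  have q1: "(1+\<alpha>)*(L - (l-1)*a) \<le> (1+\<alpha>)*X" using assms by (intro mult_left_mono) auto
  have q2: "(1+\<alpha>)*(L - (l-1)*a) = L + \<alpha>*L - (1+\<alpha>)*((l-1)*a)" by (simp add: algebra_simps)
  have q3: "(1+\<alpha>)*((l-1)*a) = l*((1+\<alpha>)*a) - (1+\<alpha>)*a" by (simp add: algebra_simps)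
  have q4: "\<alpha>*(l*(b-1)+1) \<le> \<alpha>*L" using assms by (intro mult_left_mono) auto
  have q5: "\<alpha>*(l*(b-1)+1) = l*(\<alpha>*(b-1)) + \<alpha>" by (simp add: algebra_simps)
  have q6: "\<alpha>*a \<ge> 0" using assms by simp
  have q7: "(1+\<alpha>)*a = a + \<alpha>*a" by (simp add: algebra_simps)
  have "l*(\<alpha>*(b-1)) < l*((1+\<alpha>)*a)" using q1 q2 q3 q4 q5 q6 q7 assms(1,4) by linarith
  hence "\<alpha>*(b-1) < (1+\<alpha>)*a" using assms(2) by (simp add: mult_less_cancel_left_pos)
  hence "b - 1 < (1+\<alpha>)*a/\<alpha>" using assms(1) by (simp add: less_divide_eq mult.commute)
  also have "(1+\<alpha>)*a/\<alpha> = (1 + 1/\<alpha>) * a" using assms(1) by (simp add: field_simps)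
  finally show ?thesis by simp
qed

lemma reject_bound:
  assumes m: "1 \<le> m" and \<alpha>: "0 < \<alpha>" and sh: "\<forall>i<m. 0 \<le> sh i"
    and inv: "inv_full n m sh \<alpha> OPTC (\<beta>, c)" and O0: "0 \<le> OPTC"
    and lc: "loop_cond n m (\<lambda>_. 1) 2 \<beta>" and rb: "lpt_rebalance n m (\<lambda>_. 1) (\<beta>, c) st'"
    and rj: "coll_makespan n m (\<lambda>_. 1) sh st' > ereal (1 + \<alpha>) * OPTC"
  shows "1 \<le> msz n m \<beta> \<and> (\<forall>k<m. real (sz n \<beta> k) \<le> (1 + 1/\<alpha>) * real (msz n m \<beta>) + 1)"
proof -
  obtain \<beta>' c' where st': "st' = (\<beta>', c')" by (cases st')
  have "OPTC \<noteq> \<infinity>"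
  proof
    assume "OPTC = \<infinity>"
    hence e: "ereal (1 + \<alpha>) * OPTC = \<infinity>" using \<alpha> by simp
    from rj have "\<infinity> < coll_makespan n m (\<lambda>_. 1) sh st'" by (simp only: e)
    thus False by simp
  qed
  then obtain Oc where Oc: "OPTC = ereal Oc" using O0 by (cases OPTC) auto
  have Oc0: "0 \<le> Oc" using O0 Oc by simp
  have Y: "ereal (1 + \<alpha>) * OPTC = ereal ((1 + \<alpha>) * Oc)" using Oc by simp
  have ib: "inv_basic n m (\<beta>, c)" and dd: "coll_makespan n m (\<lambda>_. 1) sh (\<beta>, c) \<le> ereal (1 + \<alpha>) * OPTC"
    and pt: "pot n m sh OPTC (\<beta>, c)" using inv unfolding inv_full_def by auto
  have \<beta>m: "\<forall>j<n. \<beta> j < m" and cm: "\<forall>k<m. c k < m"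
    and bal: "\<forall>k<m. \<forall>k'<m. c k = c k' \<longrightarrow> sz n \<beta> k \<le> sz n \<beta> k' + 1"
    using ib unfolding inv_basic_def by auto
  obtain kmin kmax where kmin: "kmin < m" and kmax: "kmax < m" and c': "c' = c(kmin := c kmax)"
    and cne: "c kmin \<noteq> c kmax" and mszk: "sz n \<beta> kmin = msz n m \<beta>"
    and kmax2: "2 \<le> sz n \<beta> kmax"
    and kmaxge: "\<forall>k<m. 2 \<le> sz n \<beta> k \<longrightarrow> sz n \<beta> k \<le> sz n \<beta> kmax"
    and \<beta>'m: "\<forall>j<n. \<beta>' j < m"
    and szout: "\<forall>k<m. c k \<noteq> c kmax \<and> k \<noteq> kmin \<longrightarrow> sz n \<beta>' k = sz n \<beta> k"
    and sumeq: "(\<Sum>k\<in>insert kmin (cset m c (c kmax)). sz n \<beta>' k) = (\<Sum>k\<in>insert kmin (cset m c (c kmax)). sz n \<beta> k)"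
    using step_core[OF m \<beta>m cm bal lc rb[unfolded st']] by blast
  note cs = cload_step[OF kmin kmax c' cne mszk szout sumeq]
  define X where "X = (1 + \<alpha>) * Oc"
  have X0: "0 \<le> X" using \<alpha> Oc0 unfolding X_def by simp
  have dd': "\<forall>i<m. ptime (real (cload n m \<beta> c i)) (sh i) \<le> ereal X"
    using dd unfolding coll_le_iff[OF m \<beta>m] Y X_def .
  have "\<not> coll_makespan n m (\<lambda>_. 1) sh (\<beta>', c') \<le> ereal X" using rj st' Y X_def by auto
  then obtain i where im: "i < m" and ni: "\<not> ptime (real (cload n m \<beta>' c' i)) (sh i) \<le> ereal X"
    unfolding coll_le_iff[OF m \<beta>'m] by auto
  have ii: "i = c kmax"
  proof (rule ccontr)
    assume ne: "i \<noteq> c kmax"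
    have "cload n m \<beta>' c' i \<le> cload n m \<beta> c i" using cs(3)[OF ne] by (simp split: if_splits)
    hence "ptime (real (cload n m \<beta>' c' i)) (sh i) \<le> ptime (real (cload n m \<beta> c i)) (sh i)"
      by (intro ptime_mono) auto
    thus False using ni dd' im by (meson order_trans)
  qed
  define i0 where "i0 = c kmax"
  have i0m: "i0 < m" using cm kmax unfolding i0_def by auto
  define L where "L = real (cload n m \<beta> c i0)"
  define a where "a = real (msz n m \<beta>)"
  define l where "l = real (card (cset m c i0))"
  define b where "b = real (sz n \<beta> kmax)"
  have shi: "0 \<le> sh i0" using sh i0m by auto
  have r1: "\<not> L + a \<le> X * sh i0"
    using ni ii cs(1) ptime_le_iff[of "real (cload n m \<beta>' c' i)" "sh i" X] shi X0
    unfolding L_def a_def i0_def by auto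
  have r2: "L \<le> X * sh i0"
    using dd' i0m ptime_le_iff[of L "sh i0" X] shi X0 unfolding L_def by auto
  have ne0: "cset m c i0 \<noteq> {}" using kmax unfolding i0_def cset_def by auto
  have r3: "L \<le> Oc * sh i0 + (l - 1) * a"
    using pt Oc i0m ne0 unfolding pot_def L_def l_def a_def by auto
  have r4: "L \<ge> l * (b - 1) + 1"
    using coll_lower[OF bal kmax] kmax2 unfolding L_def l_def b_def i0_def by auto
  have l1: "l \<ge> 1" using card_ge1[OF ne0] unfolding l_def .
  have a0: "a \<ge> 0" unfolding a_def by simp
  have "L + a > (1+\<alpha>) * (Oc * sh i0)" using r1 unfolding X_def by (simp add: mult.assoc)
  hence bb: "b \<le> (1 + 1/\<alpha>) * a + 1" using alg[OF \<alpha> l1 a0 _ r3 r4] by simp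
  have "a > 0" using r1 r2 by linarith
  hence a1: "1 \<le> msz n m \<beta>" unfolding a_def by simp
  have "\<forall>k<m. real (sz n \<beta> k) \<le> (1 + 1/\<alpha>) * a + 1"
  proof (intro allI impI)
    fix k assume km: "k < m"
    show "real (sz n \<beta> k) \<le> (1 + 1/\<alpha>) * a + 1"
    proof (cases "2 \<le> sz n \<beta> k")
      case True
      hence "real (sz n \<beta> k) \<le> b" using kmaxge km unfolding b_def by auto
      thus ?thesis using bb by linarith
    next
      case False
      have "0 \<le> (1 + 1/\<alpha>) * a" using \<alpha> a0 by simp
      thus ?thesis using False by simp
    qed
  qed
  thus ?thesis using a1 unfolding a_def by auto
qed

lemma stop_bound:
  assumes m: "1 \<le> m" and nlc: "\<not> loop_cond n m (\<lambda>_. 1) 2 \<beta>"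
  shows "(\<forall>k<m. sz n \<beta> k \<le> 1) \<or> (1 \<le> msz n m \<beta> \<and> (\<forall>k<m. sz n \<beta> k \<le> 2 * msz n m \<beta>))"
proof -
  define K2 where "K2 = {k. k < m \<and> card (bag n \<beta> k) \<ge> 2}"
  have fK2: "finite K2" unfolding K2_def by auto
  obtain k0 where k0: "k0 < m" "msz n m \<beta> = sz n \<beta> k0" using msz_in[OF m] by blast
  have mn: "Min ((\<lambda>k. psum (\<lambda>_. 1) (bag n \<beta> k)) ` {..<m}) = real (msz n m \<beta>)"
  proof (rule Min_eqI)
    show "finite ((\<lambda>k. psum (\<lambda>_. 1) (bag n \<beta> k)) ` {..<m})" by simp
    show "\<And>y. y \<in> (\<lambda>k. psum (\<lambda>_. 1) (bag n \<beta> k)) ` {..<m} \<Longrightarrow> real (msz n m \<beta>) \<le> y"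
      using msz_le[of _ m n \<beta>] by (auto simp: psum_bag)
    show "real (msz n m \<beta>) \<in> (\<lambda>k. psum (\<lambda>_. 1) (bag n \<beta> k)) ` {..<m}"
      using k0 by (auto simp: psum_bag)
  qed
  show ?thesis
  proof (cases "K2 = {}")
    case True
    hence "\<forall>k<m. sz n \<beta> k \<le> 1" unfolding K2_def sz_def by auto
    thus ?thesis by simp
  next
    case False
    hence le: "Max ((\<lambda>k. psum (\<lambda>_. 1) (bag n \<beta> k)) ` K2) \<le> 2 * real (msz n m \<beta>)"
      using nlc unfolding loop_cond_def Let_def K2_def[symmetric] mn by auto
    have kle: "real (sz n \<beta> k) \<le> 2 * real (msz n m \<beta>)" if "k \<in> K2" for k
    proof -
      have "psum (\<lambda>_. 1) (bag n \<beta> k) \<le> Max ((\<lambda>k. psum (\<lambda>_. 1) (bag n \<beta> k)) ` K2)"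
        using that fK2 by (intro Max_ge) auto
      thus ?thesis using le by (simp add: psum_bag)
    qed
    obtain k1 where k1: "k1 \<in> K2" using False by auto
    have "2 \<le> sz n \<beta> k1" using k1 unfolding K2_def sz_def by auto
    hence a1: "1 \<le> msz n m \<beta>" using kle[OF k1] by linarith
    have "\<forall>k<m. sz n \<beta> k \<le> 2 * msz n m \<beta>"
    proof (intro allI impI)
      fix k assume km: "k < m"
      show "sz n \<beta> k \<le> 2 * msz n m \<beta>"
      proof (cases "k \<in> K2")
        case True thus ?thesis using kle[OF True] by linarith
      next
        case False thus ?thesis using km a1 unfolding K2_def sz_def by auto
      qed
    qed
    thus ?thesis using a1 by auto
  qed
qed

lemma run_lemma:
  assumes "ipr_run n m (\<lambda>_. 1) sh \<alpha> 2 OPTC st out" and m: "1 \<le> m"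
  shows "inv_full n m sh \<alpha> OPTC st \<Longrightarrow> \<exists>c. inv_full n m sh \<alpha> OPTC (out, c) \<and> (\<not> loop_cond n m (\<lambda>_. 1) 2 out \<or>
     (loop_cond n m (\<lambda>_. 1) 2 out \<and> (\<exists>st'. lpt_rebalance n m (\<lambda>_. 1) (out, c) st' \<and>
        coll_makespan n m (\<lambda>_. 1) sh st' > ereal (1 + \<alpha>) * OPTC)))"
  using assms(1)
proof (induction rule: ipr_run.induct)
  case (stop st)
  then show ?case by (intro exI[of _ "snd st"]) auto
next
  case (reject st st')
  have "lpt_rebalance n m (\<lambda>_. 1) (fst st, snd st) st' \<and> coll_makespan n m (\<lambda>_. 1) sh st' > ereal (1 + \<alpha>) * OPTC"
    using reject by simp
  hence ex: "\<exists>st''. lpt_rebalance n m (\<lambda>_. 1) (fst st, snd st) st'' \<and> coll_makespan n m (\<lambda>_. 1) sh st'' > ereal (1 + \<alpha>) * OPTC"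
    by (rule exI[of _ st'])
  have "inv_full n m sh \<alpha> OPTC (fst st, snd st)" using reject by simp
  then show ?case using reject(1) ex by blast
next
  case (cont st st' out)
  have "inv_full n m sh \<alpha> OPTC st'"
  proof -
    obtain b1 c1 where s1: "st = (b1, c1)" by (cases st)
    obtain b2 c2 where s2: "st' = (b2, c2)" by (cases st')
    show ?thesis using full_step[OF m] cont unfolding s1 s2 by blast
  qed
  then show ?case using cont.IH by auto
qed

lemma ereal_le_scale: "0 \<le> (x::ereal) \<Longrightarrow> 0 \<le> \<alpha> \<Longrightarrow> x \<le> ereal (1 + \<alpha>) * x"
  by (cases x) (auto simp: ring_distribs)

lemma init_inv:
  assumes m: "1 \<le> m" and \<alpha>: "0 < \<alpha>" and sh: "\<forall>i<m. 0 \<le> sh i"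
    and init: "ipr_init n m (\<lambda>_. 1) sh \<epsilon> \<beta>0"
  shows "inv_full n m sh \<alpha> (makespan n m (\<lambda>_. 1) sh \<beta>0) (\<beta>0, id)"
proof -
  let ?O = "makespan n m (\<lambda>_. 1) sh \<beta>0"
  have \<beta>m: "\<forall>j<n. \<beta>0 j < m" using init unfolding ipr_init_def by auto
  have O0: "0 \<le> ?O" by (rule makespan_nonneg[OF m])
  have ib: "inv_basic n m (\<beta>0, id)" using \<beta>m unfolding inv_basic_def by auto
  have cm: "coll_makespan n m (\<lambda>_. 1) sh (\<beta>0, id) = ?O" unfolding coll_makespan_def by simp
  have pt: "pot n m sh ?O (\<beta>0, id)"
    unfolding pot_def fst_conv snd_conv
  proof (intro allI impI)
    fix Oc i assume Oc: "?O = ereal Oc" and im: "i < m" and ne: "cset m id i \<noteq> {}"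
    have cs: "cset m id i = {i}" using im unfolding cset_def by auto
    have ld: "load n (\<lambda>_. 1) \<beta>0 i = real (sz n \<beta>0 i)" unfolding load_one sz_def bag_def by simp
    have "ptime (load n (\<lambda>_. 1) \<beta>0 i) (sh i) \<le> ereal Oc" using makespan_ge[OF im] Oc by metis
    hence "real (sz n \<beta>0 i) \<le> Oc * sh i" unfolding ld using ptime_le_iff[of "real (sz n \<beta>0 i)" "sh i" Oc] sh im O0 Oc by auto
    thus "real (cload n m \<beta>0 id i) \<le> Oc * sh i + (real (card (cset m id i)) - 1) * real (msz n m \<beta>0)"
      unfolding cload_def cs by simp
  qed
  show ?thesis unfolding inv_full_def using ib cm pt ereal_le_scale[OF O0, of \<alpha>] \<alpha> by auto
qed

lemma opt_nonneg: "1 \<le> m \<Longrightarrow> 0 \<le> opt n m (\<lambda>_. 1) s"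
  using opt_attained[of m n "\<lambda>_. 1" s] makespan_nonneg by metis

lemma final_bag:
  assumes m: "1 \<le> m" and inv: "inv_full n m sh \<alpha> OPTC (\<beta>, c)"
  shows "bag_makespan n m (\<lambda>_. 1) s' \<beta> \<le> coll_makespan n m (\<lambda>_. 1) s' (\<beta>, c)"
proof -
  have "\<forall>j<n. \<beta> j < m" "\<forall>k<m. c k < m" using inv unfolding inv_full_def inv_basic_def by auto
  thus ?thesis unfolding coll_makespan_def using bag_makespan_le' by auto
qed

theorem theorem3:
  fixes n m :: nat and \<epsilon> \<alpha> :: real
  assumes "1 \<le> m" and "0 < \<epsilon>" and "\<epsilon> < 1" and "0 < \<alpha>" and "\<alpha> < 1"
  shows
    \<comment> \<open>consistency: predicted speeds equal true speeds\<close>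
    "(\<forall>s. (\<forall>i<m. 0 < s i) \<longrightarrow> (\<forall>i j. i \<le> j \<longrightarrow> j < m \<longrightarrow> s j \<le> s i) \<longrightarrow>
        (\<forall>\<beta>. ipr_output n m (\<lambda>_. 1) s \<epsilon> \<alpha> 2 \<beta> \<longrightarrow>
           bag_makespan n m (\<lambda>_. 1) s \<beta> \<le> ereal ((1 + \<epsilon>) * (1 + \<alpha>)) * opt n m (\<lambda>_. 1) s))
     \<and>
     \<comment> \<open>robustness: arbitrary predictions, arbitrary true speeds\<close>
     (\<forall>sh s. (\<forall>i<m. 0 \<le> sh i) \<longrightarrow> (\<forall>i j. i \<le> j \<longrightarrow> j < m \<longrightarrow> sh j \<le> sh i) \<longrightarrow>
        (\<forall>i<m. 0 < s i) \<longrightarrow>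
        (\<forall>\<beta>. ipr_output n m (\<lambda>_. 1) sh \<epsilon> \<alpha> 2 \<beta> \<longrightarrow>
           bag_makespan n m (\<lambda>_. 1) s \<beta> \<le> ereal (2 + 1 / \<alpha>) * opt n m (\<lambda>_. 1) s))
     \<and>
     \<comment> \<open>IPR is an algorithm: the while loop always terminates\<close>
     (\<forall>sh \<beta>0. (\<forall>i<m. 0 \<le> sh i) \<longrightarrow> (\<forall>i j. i \<le> j \<longrightarrow> j < m \<longrightarrow> sh j \<le> sh i) \<longrightarrow>
        ipr_init n m (\<lambda>_. 1) sh \<epsilon> \<beta>0 \<longrightarrow>
        \<not> (\<exists>f. f 0 = (\<beta>0, id) \<and>
              (\<forall>k. ipr_step n m (\<lambda>_. 1) sh \<alpha> 2 (makespan n m (\<lambda>_. 1) sh \<beta>0) (f k) (f (Suc k)))))"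
proof (intro conjI allI impI)
  have m: "1 \<le> m" and \<alpha>: "0 < \<alpha>" and \<alpha>1: "\<alpha> < 1" and \<epsilon>: "0 < \<epsilon>" using assms by auto
  fix s \<beta>
  assume s: "\<forall>i<m. 0 < s i" and "\<forall>i j. i \<le> j \<longrightarrow> j < m \<longrightarrow> s j \<le> s i"
    and out: "ipr_output n m (\<lambda>_. 1) s \<epsilon> \<alpha> 2 \<beta>"
  obtain \<beta>0 where init: "ipr_init n m (\<lambda>_. 1) s \<epsilon> \<beta>0"
    and run: "ipr_run n m (\<lambda>_. 1) s \<alpha> 2 (makespan n m (\<lambda>_. 1) s \<beta>0) (\<beta>0, id) \<beta>"
    using out unfolding ipr_output_def by auto
  have s0: "\<forall>i<m. 0 \<le> s i" using s by (auto intro: less_imp_le)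
  obtain c where inv: "inv_full n m s \<alpha> (makespan n m (\<lambda>_. 1) s \<beta>0) (\<beta>, c)"
    using run_lemma[OF run m init_inv[OF m \<alpha> s0 init]] by blast
  have "bag_makespan n m (\<lambda>_. 1) s \<beta> \<le> coll_makespan n m (\<lambda>_. 1) s (\<beta>, c)" by (rule final_bag[OF m inv])
  also have "\<dots> \<le> ereal (1 + \<alpha>) * makespan n m (\<lambda>_. 1) s \<beta>0" using inv unfolding inv_full_def by auto
  also have "\<dots> \<le> ereal (1 + \<alpha>) * (ereal (1 + \<epsilon>) * opt n m (\<lambda>_. 1) s)"
    using init \<alpha> unfolding ipr_init_def by (intro ereal_mult_left_mono) auto
  also have "\<dots> = ereal ((1 + \<epsilon>) * (1 + \<alpha>)) * opt n m (\<lambda>_. 1) s"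
    by (simp add: mult.assoc[symmetric] mult.commute)
  finally show "bag_makespan n m (\<lambda>_. 1) s \<beta> \<le> ereal ((1 + \<epsilon>) * (1 + \<alpha>)) * opt n m (\<lambda>_. 1) s" .
next
  have m: "1 \<le> m" and \<alpha>: "0 < \<alpha>" and \<alpha>1: "\<alpha> < 1" using assms by auto
  fix sh s :: "nat \<Rightarrow> real" and \<beta> :: "nat \<Rightarrow> nat"
  assume sh: "\<forall>i<m. 0 \<le> sh i" and "\<forall>i j. i \<le> j \<longrightarrow> j < m \<longrightarrow> sh j \<le> sh i"
    and s: "\<forall>i<m. 0 < s i" and out: "ipr_output n m (\<lambda>_. 1) sh \<epsilon> \<alpha> 2 \<beta>"
  obtain \<beta>0 where init: "ipr_init n m (\<lambda>_. 1) sh \<epsilon> \<beta>0"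
    and run: "ipr_run n m (\<lambda>_. 1) sh \<alpha> 2 (makespan n m (\<lambda>_. 1) sh \<beta>0) (\<beta>0, id) \<beta>"
    using out unfolding ipr_output_def by auto
  obtain c where inv: "inv_full n m sh \<alpha> (makespan n m (\<lambda>_. 1) sh \<beta>0) (\<beta>, c)"
    and cases: "\<not> loop_cond n m (\<lambda>_. 1) 2 \<beta> \<or> (loop_cond n m (\<lambda>_. 1) 2 \<beta> \<and> (\<exists>st'. lpt_rebalance n m (\<lambda>_. 1) (\<beta>, c) st' \<and>
        coll_makespan n m (\<lambda>_. 1) sh st' > ereal (1 + \<alpha>) * makespan n m (\<lambda>_. 1) sh \<beta>0))"
    using run_lemma[OF run m init_inv[OF m \<alpha> sh init]] by blast
  have \<beta>m: "\<forall>j<n. \<beta> j < m" using inv unfolding inv_full_def inv_basic_def by auto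
  define R where "R = 1 + 1/\<alpha>"
  have R1: "R \<ge> 1" unfolding R_def using \<alpha> by simp
  have R2: "R \<ge> 2" unfolding R_def using \<alpha> \<alpha>1 by (simp add: field_simps)
  have RR: "ereal (R + 1) = ereal (2 + 1/\<alpha>)" unfolding R_def by simp
  have opt0: "0 \<le> opt n m (\<lambda>_. 1) s" by (rule opt_nonneg[OF m])
  have big: "bag_makespan n m (\<lambda>_. 1) s \<beta> \<le> ereal (2 + 1/\<alpha>) * opt n m (\<lambda>_. 1) s"
    if bnd: "1 \<le> msz n m \<beta>" "\<forall>k<m. real (sz n \<beta> k) \<le> R * real (msz n m \<beta>) + 1"
  proof -
    have "\<forall>k<m. real (msz n m \<beta>) \<le> real (sz n \<beta> k) \<and> real (sz n \<beta> k) \<le> R * real (msz n m \<beta>) + 1"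
      using bnd msz_le by auto
    from robust_bags[OF m s \<beta>m R1 _ this] bnd show ?thesis unfolding RR by simp
  qed
  from cases show "bag_makespan n m (\<lambda>_. 1) s \<beta> \<le> ereal (2 + 1/\<alpha>) * opt n m (\<lambda>_. 1) s"
  proof
    assume nlc: "\<not> loop_cond n m (\<lambda>_. 1) 2 \<beta>"
    show ?thesis
    proof (cases "\<forall>k<m. sz n \<beta> k \<le> 1")
      case True
      have "bag_makespan n m (\<lambda>_. 1) s \<beta> \<le> opt n m (\<lambda>_. 1) s" by (rule small_bags[OF m \<beta>m True])
      also have "\<dots> \<le> ereal (2 + 1/\<alpha>) * opt n m (\<lambda>_. 1) s"
        using ereal_le_scale[OF opt0, of "1 + 1/\<alpha>"] \<alpha> by (simp add: add.assoc)
      finally show ?thesis .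
    next
      case False
      hence b: "1 \<le> msz n m \<beta>" "\<forall>k<m. sz n \<beta> k \<le> 2 * msz n m \<beta>" using stop_bound[OF m nlc] by auto
      have "\<forall>k<m. real (sz n \<beta> k) \<le> R * real (msz n m \<beta>) + 1"
      proof (intro allI impI)
        fix k assume "k < m"
        hence "real (sz n \<beta> k) \<le> 2 * real (msz n m \<beta>)" using b by (metis of_nat_le_iff of_nat_mult of_nat_numeral)
        moreover have "2 * real (msz n m \<beta>) \<le> R * real (msz n m \<beta>)" using R2 by (intro mult_right_mono) auto
        ultimately show "real (sz n \<beta> k) \<le> R * real (msz n m \<beta>) + 1" by linarith
      qed
      thus ?thesis using big b by auto
    qed
  next
    assume "loop_cond n m (\<lambda>_. 1) 2 \<beta> \<and> (\<exists>st'. lpt_rebalance n m (\<lambda>_. 1) (\<beta>, c) st' \<and>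
        coll_makespan n m (\<lambda>_. 1) sh st' > ereal (1 + \<alpha>) * makespan n m (\<lambda>_. 1) sh \<beta>0)"
    then obtain st' where lc: "loop_cond n m (\<lambda>_. 1) 2 \<beta>" and rb: "lpt_rebalance n m (\<lambda>_. 1) (\<beta>, c) st'"
      and rj: "coll_makespan n m (\<lambda>_. 1) sh st' > ereal (1 + \<alpha>) * makespan n m (\<lambda>_. 1) sh \<beta>0" by blast
    have "1 \<le> msz n m \<beta> \<and> (\<forall>k<m. real (sz n \<beta> k) \<le> (1 + 1/\<alpha>) * real (msz n m \<beta>) + 1)"
      by (rule reject_bound[OF m \<alpha> sh inv makespan_nonneg[OF m] lc rb rj])
    thus ?thesis using big unfolding R_def by auto
  qed
next
  have m: "1 \<le> m" using assms by auto
  fix sh \<beta>0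
  assume "\<forall>i<m. 0 \<le> sh i" "\<forall>i j. i \<le> j \<longrightarrow> j < m \<longrightarrow> sh j \<le> sh i" and init: "ipr_init n m (\<lambda>_. 1) sh \<epsilon> \<beta>0"
  have "inv_basic n m (\<beta>0, id)" using init unfolding ipr_init_def inv_basic_def by auto
  from terminates[OF m this]
  show "\<not> (\<exists>f. f 0 = (\<beta>0, id) \<and>
              (\<forall>k. ipr_step n m (\<lambda>_. 1) sh \<alpha> 2 (makespan n m (\<lambda>_. 1) sh \<beta>0) (f k) (f (Suc k))))" .
qed

end
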